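(* Let $\mathcal M_{A,\partial}$ be an $M$-complex with $A=\{a_1\prec\dots\prec a_N\}$. For $k\le N$ write $A^k=\{a_1\prec\dots\prec a_k\}$ and let $\iota_*$ denote the map in homology induced by the inclusion $\mathbb E(A^j)\hookrightarrow\mathbb E(A)$. (1) An element $a_j\in A$ of degree $l$ is $\partial$-homologically essential if and only if $\dim\iota_*(H_l(\mathbb E(A^j),\partial))=\dim\iota_*(H_l(\mathbb E(A^{j-1}),\partial))+1$. The number of homologically essential elements of degree $k$ equals $\dim H_k(\mathcal M_{A,\partial})$. (2) An element $a_i\in A$ is not homologically essential if and only if $\iota_*H_*(\mathbb E(A^i),\partial)=\iota_*H_*(\mathbb E(A^{i-1}),\partial)$. (3) Elements $a_m,a_n\in A$ with $m>n$ form a $\partial$-pair if and only if $\dim H_*(\mathbb E(A^m),\mathbb E(A^n),\partial)=\dim H_*(\mathbb E(A^{m-1}),\mathbb E(A^{n-1}),\partial)=\dim H_*(\mathbb E(A^{m-1}),\mathbb E(A^n),\partial)+1=\dim H_*(\mathbb E(A^m),\mathbb E(A^{n-1}),\partial)+1.$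
   Context: $\mathbb E$ is a field. An $M$-complex $\mathcal M_{A,\partial}$: $A=\{a_1\prec\dots\prec a_N\}$ a finite linearly ordered set with grading $\deg:A\to\mathbb Z$, $\mathbb E(A)$ the graded vector space with basis $A$, and $\partial$ a degree $-1$ linear map with $\partial^2=0$ and $\partial(a_i)\in\mathrm{span}\{a_1,\dots,a_{i-1}\}$ for all $i$ (an $M$-differential). Each $\mathbb E(A^k)$ is a subcomplex, $\dim H_*$ denotes total dimension and relative homology is that of the quotient complex. $\mathrm{Aut}_T(A)$ is the group of graded automorphisms preserving each $\mathrm{span}\{a_1,\dots,a_i\}$; $M$-differentials $\partial_1,\partial_2$ are equivalent if $\partial_2=g\partial_1g^{-1}$, $g\in\mathrm{Aut}_T(A)$. An $M$-differential is elementary if for each $a\in A$ either $\partial(a)=0$ or $\partial(a)=b$ for some $b\in A$, and $\partial(x)=\partial(y)=z$ with $x,y,z\in A$ implies $x=y$. It is known (Barannikov) that every $M$-differential $\partial$ is equivalent to a unique elementary $M$-differential $\partial_1$. Elements $a_i,a_j$ form a $\partial$-pair if $\partial_1(a_i)=a_j$; an element is $\partial$-homologically essential if it belongs to no $\partial$-pair. *)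

theory Defs
  imports Complex_Main "HOL-Library.Function_Algebras"
begin

text \<open>An M-complex with basis A = {a_1 < ... < a_N} is encoded by indices 1..N,
  a grading deg on indices, and the matrix d of the differential:
  d i j is the coefficient of a_i in the boundary of a_j.\<close>

definition fscale :: "'a::field \<Rightarrow> (nat \<Rightarrow> 'a) \<Rightarrow> (nat \<Rightarrow> 'a)" where
  "fscale c v = (\<lambda>n. c * v n)"

definition fdim :: "(nat \<Rightarrow> 'a::field) set \<Rightarrow> nat" where
  "fdim V = vector_space.dim fscale V"

lemma vector_space_fscale: "vector_space (fscale :: 'a::field \<Rightarrow> _)"
  by unfold_locales (auto simp: fscale_def algebra_simps)

definition M_differential :: "nat \<Rightarrow> (nat \<Rightarrow> int) \<Rightarrow> (nat \<Rightarrow> nat \<Rightarrow> 'a::field) \<Rightarrow> bool" where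
  "M_differential N deg d \<longleftrightarrow>
     (\<forall>i j. d i j \<noteq> 0 \<longrightarrow> 1 \<le> i \<and> i < j \<and> j \<le> N \<and> deg i = deg j - 1) \<and>
     (\<forall>i k. (\<Sum>j\<in>{1..N}. d i j * d j k) = 0)"

definition chains :: "nat set \<Rightarrow> (nat \<Rightarrow> 'a::zero) set" where
  "chains S = {v. \<forall>n. n \<notin> S \<longrightarrow> v n = 0}"

definition chains_deg :: "(nat \<Rightarrow> int) \<Rightarrow> nat set \<Rightarrow> int \<Rightarrow> (nat \<Rightarrow> 'a::zero) set" where
  "chains_deg deg S l = {v. \<forall>n. (n \<notin> S \<or> deg n \<noteq> l) \<longrightarrow> v n = 0}"

text \<open>Differential of the complex with basis indexed by S (an interval), with the
  induced differential: for S = {1..k} this is the subcomplex E(A^k); for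
  S = {n+1..m} it is the quotient complex E(A^m)/E(A^n) in its standard basis.\<close>
definition bdry :: "(nat \<Rightarrow> nat \<Rightarrow> 'a::field) \<Rightarrow> nat set \<Rightarrow> (nat \<Rightarrow> 'a) \<Rightarrow> (nat \<Rightarrow> 'a)" where
  "bdry d S v = (\<lambda>i. if i \<in> S then (\<Sum>j\<in>S. d i j * v j) else 0)"

definition cycles_deg where
  "cycles_deg deg d S l = {v \<in> chains_deg deg S l. bdry d S v = 0}"
definition boundaries_deg where
  "boundaries_deg deg d S l = bdry d S ` chains_deg deg S (l + 1)"
definition cycles where
  "cycles d S = {v \<in> chains S. bdry d S v = 0}"
definition boundaries where
  "boundaries d S = bdry d S ` chains S"

definition hdim_deg :: "(nat \<Rightarrow> int) \<Rightarrow> (nat \<Rightarrow> nat \<Rightarrow> 'a::field) \<Rightarrow> nat set \<Rightarrow> int \<Rightarrow> nat" where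
  "hdim_deg deg d S l = fdim (cycles_deg deg d S l) - fdim (boundaries_deg deg d S l)"

definition hdim_tot :: "(nat \<Rightarrow> nat \<Rightarrow> 'a::field) \<Rightarrow> nat set \<Rightarrow> nat" where
  "hdim_tot d S = fdim (cycles d S) - fdim (boundaries d S)"

text \<open>dim H_*(E(A^m), E(A^n)) for n \<le> m: homology of the quotient complex.\<close>
definition rel_hdim :: "(nat \<Rightarrow> nat \<Rightarrow> 'a::field) \<Rightarrow> nat \<Rightarrow> nat \<Rightarrow> nat" where
  "rel_hdim d m n = hdim_tot d {Suc n..m}"

text \<open>dim of iota_*(H_l(E(A^j))) inside H_l(E(A)): (Z_l(A^j) + B_l(A)) / B_l(A).\<close>
definition iota_dim :: "nat \<Rightarrow> (nat \<Rightarrow> int) \<Rightarrow> (nat \<Rightarrow> nat \<Rightarrow> 'a::field) \<Rightarrow> nat \<Rightarrow> int \<Rightarrow> nat" where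
  "iota_dim N deg d j l =
     fdim {z + b | z b. z \<in> cycles_deg deg d {1..j} l \<and> b \<in> boundaries_deg deg d {1..N} l}
     - fdim (boundaries_deg deg d {1..N} l)"

text \<open>iota_*(H_*(E(A^j))) as a set of homology classes (cosets of B_*(A)) in H_*(E(A)).\<close>
definition iota_img :: "nat \<Rightarrow> (nat \<Rightarrow> nat \<Rightarrow> 'a::field) \<Rightarrow> nat \<Rightarrow> (nat \<Rightarrow> 'a) set set" where
  "iota_img N d j = (\<lambda>z. {z + b | b. b \<in> boundaries d {1..N}}) ` cycles d {1..j}"

definition matmul :: "nat \<Rightarrow> (nat \<Rightarrow> nat \<Rightarrow> 'a::field) \<Rightarrow> (nat \<Rightarrow> nat \<Rightarrow> 'a) \<Rightarrow> (nat \<Rightarrow> nat \<Rightarrow> 'a)" where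
  "matmul N x y = (\<lambda>i k. \<Sum>j\<in>{1..N}. x i j * y j k)"

text \<open>Aut_T(A): graded automorphisms of E(A) preserving each span{a_1..a_i}
  (g i j = coefficient of a_i in g(a_j)).\<close>
definition autT :: "nat \<Rightarrow> (nat \<Rightarrow> int) \<Rightarrow> (nat \<Rightarrow> nat \<Rightarrow> 'a::field) \<Rightarrow> bool" where
  "autT N deg g \<longleftrightarrow>
     (\<forall>i j. g i j \<noteq> 0 \<longrightarrow> i \<le> j \<and> deg i = deg j) \<and>
     (\<exists>h. \<forall>i\<in>{1..N}. \<forall>k\<in>{1..N}.
        matmul N g h i k = (if i = k then 1 else 0) \<and> matmul N h g i k = (if i = k then 1 else 0))"

definition M_equiv :: "nat \<Rightarrow> (nat \<Rightarrow> int) \<Rightarrow> (nat \<Rightarrow> nat \<Rightarrow> 'a::field) \<Rightarrow> (nat \<Rightarrow> nat \<Rightarrow> 'a) \<Rightarrow> bool" where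
  "M_equiv N deg d1 d2 \<longleftrightarrow> M_differential N deg d1 \<and> M_differential N deg d2 \<and>
     (\<exists>g h. autT N deg g \<and>
        (\<forall>i\<in>{1..N}. \<forall>k\<in>{1..N}. matmul N g h i k = (if i = k then 1 else 0)
                               \<and> matmul N h g i k = (if i = k then 1 else 0)) \<and>
        (\<forall>i\<in>{1..N}. \<forall>j\<in>{1..N}. d2 i j = matmul N (matmul N g d1) h i j))"

definition elementary :: "nat \<Rightarrow> (nat \<Rightarrow> int) \<Rightarrow> (nat \<Rightarrow> nat \<Rightarrow> 'a::field) \<Rightarrow> bool" where
  "elementary N deg d \<longleftrightarrow> M_differential N deg d \<and>
     (\<forall>j\<in>{1..N}. (\<forall>i. d i j = 0) \<or> (\<exists>i\<in>{1..N}. \<forall>k. d k j = (if k = i then 1 else 0))) \<and>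
     (\<forall>x\<in>{1..N}. \<forall>y\<in>{1..N}. \<forall>z\<in>{1..N}.
        (\<forall>k. d k x = (if k = z then 1 else 0)) \<and> (\<forall>k. d k y = (if k = z then 1 else 0)) \<longrightarrow> x = y)"

text \<open>The unique elementary M-differential equivalent to d (Barannikov).\<close>
definition elem_form :: "nat \<Rightarrow> (nat \<Rightarrow> int) \<Rightarrow> (nat \<Rightarrow> nat \<Rightarrow> 'a::field) \<Rightarrow> (nat \<Rightarrow> nat \<Rightarrow> 'a)" where
  "elem_form N deg d = (THE d1. elementary N deg d1 \<and> M_equiv N deg d d1)"

text \<open>dpair N deg d i j: the elementary form maps a_i to a_j.\<close>
definition dpair :: "nat \<Rightarrow> (nat \<Rightarrow> int) \<Rightarrow> (nat \<Rightarrow> nat \<Rightarrow> 'a::field) \<Rightarrow> nat \<Rightarrow> nat \<Rightarrow> bool" where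
  "dpair N deg d i j \<longleftrightarrow> i \<in> {1..N} \<and> j \<in> {1..N} \<and> elem_form N deg d j i = 1"

definition forms_pair where
  "forms_pair N deg d x y \<longleftrightarrow> dpair N deg d x y \<or> dpair N deg d y x"

definition essential :: "nat \<Rightarrow> (nat \<Rightarrow> int) \<Rightarrow> (nat \<Rightarrow> nat \<Rightarrow> 'a::field) \<Rightarrow> nat \<Rightarrow> bool" where
  "essential N deg d x \<longleftrightarrow> \<not> (\<exists>y. forms_pair N deg d x y)"

end

theory Submission
  imports Defs
begin

interpretation FS: vector_space "fscale :: 'a::field \<Rightarrow> (nat \<Rightarrow> 'a) \<Rightarrow> _"
  by (rule vector_space_fscale)

lemma fsum_apply: "(\<Sum>i\<in>I. f i) x = (\<Sum>i\<in>I. f i x)"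
  by (induction I rule: infinite_finite_induct) auto

lemma sum_delta_mult1:
  "finite T \<Longrightarrow> (\<Sum>s\<in>T. (g s::'a::comm_semiring_1) * (if t = s then 1 else 0)) = (if t \<in> T then g t else 0)"
proof -
  assume f: "finite T"
  have "(\<Sum>s\<in>T. g s * (if t = s then 1 else 0)) = (\<Sum>s\<in>T. if t = s then g s else 0)"
    by (rule sum.cong) auto
  thus ?thesis using f by (simp add: sum.delta)
qed

lemma sum_delta_mult2:
  "finite T \<Longrightarrow> (\<Sum>s\<in>T. (g s::'a::comm_semiring_1) * (if s = t then 1 else 0)) = (if t \<in> T then g t else 0)"
  using sum_delta_mult1[of T g t] by (simp add: eq_commute[of _ t])

lemma sum_delta_mult3:
  "finite T \<Longrightarrow> (\<Sum>s\<in>T. (if t = s then 1 else 0) * (g s::'a::comm_semiring_1)) = (if t \<in> T then g t else 0)"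
  using sum_delta_mult1[of T g t] by (simp add: mult.commute)

lemma sum_delta_mult4:
  "finite T \<Longrightarrow> (\<Sum>s\<in>T. (if s = t then 1 else 0) * (g s::'a::comm_semiring_1)) = (if t \<in> T then g t else 0)"
  using sum_delta_mult2[of T g t] by (simp add: mult.commute)

lemmas sum_delta_mult = sum_delta_mult1 sum_delta_mult2 sum_delta_mult3 sum_delta_mult4

definition ev :: "nat \<Rightarrow> nat \<Rightarrow> 'a::field" where
  "ev t = (\<lambda>n. if n = t then 1 else 0)"

lemma subspace_chains: "FS.subspace (chains T :: (nat \<Rightarrow> 'a::field) set)"
  unfolding FS.subspace_def chains_def fscale_def by auto

lemma fdim_chains:
  assumes "finite T"
  shows "fdim (chains T :: (nat \<Rightarrow> 'a::field) set) = card T"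
proof -
  let ?E = "(ev :: nat \<Rightarrow> nat \<Rightarrow> 'a) ` T"
  have inj: "inj (ev :: nat \<Rightarrow> nat \<Rightarrow> 'a)"
    by (rule injI) (metis ev_def zero_neq_one)
  have fin: "finite ?E" using assms by simp
  have sp: "FS.span ?E = chains T"
  proof
    show "FS.span ?E \<subseteq> chains T"
      by (rule FS.span_minimal[OF _ subspace_chains]) (auto simp: chains_def ev_def)
    show "chains T \<subseteq> FS.span ?E"
    proof
      fix v :: "nat \<Rightarrow> 'a" assume v: "v \<in> chains T"
      have "v = (\<Sum>t\<in>T. fscale (v t) (ev t))"
      proof
        fix n
        show "v n = (\<Sum>t\<in>T. fscale (v t) (ev t)) n"
          using v assms by (simp add: fsum_apply fscale_def ev_def sum_delta_mult chains_def)
      qed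
      also have "\<dots> \<in> FS.span ?E"
        by (intro FS.span_sum FS.span_scale FS.span_base) auto
      finally show "v \<in> FS.span ?E" .
    qed
  qed
  have ind: "FS.independent ?E"
  proof (rule FS.independent_if_scalars_zero[OF fin])
    fix f x assume s: "(\<Sum>x\<in>?E. fscale (f x) x) = 0" and x: "x \<in> ?E"
    then obtain t where t: "t \<in> T" "x = ev t" by auto
    have "(\<Sum>x\<in>?E. fscale (f x) x) t = (\<Sum>s\<in>T. fscale (f (ev s)) (ev s)) t"
      by (subst sum.reindex) (auto intro: inj_on_subset[OF inj])
    also have "\<dots> = f (ev t)"
      using t assms by (simp add: fsum_apply fscale_def ev_def sum_delta_mult)
    finally show "f x = 0" using s t by simp
  qed
  have "fdim (chains T :: (nat \<Rightarrow> 'a) set) = FS.dim (FS.span ?E)"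
    unfolding fdim_def sp ..
  also have "\<dots> = card ?E" by (rule FS.dim_span_eq_card_independent[OF ind])
  also have "\<dots> = card T" by (rule card_image[OF inj_on_subset[OF inj]]) simp
  finally show ?thesis .
qed

lemma fdim_image_inj:
  fixes f :: "(nat \<Rightarrow> 'a::field) \<Rightarrow> (nat \<Rightarrow> 'a)"
  assumes lin: "Vector_Spaces.linear fscale fscale f" and VW: "V \<subseteq> W" and W: "FS.subspace W"
    and inj: "inj_on f W"
  shows "fdim (f ` V) = fdim V"
proof -
  interpret P: vector_space_pair "fscale :: 'a \<Rightarrow> _" "fscale :: 'a \<Rightarrow> _"
    by unfold_locales
  obtain B where B: "B \<subseteq> V" "FS.independent B" "V \<subseteq> FS.span B" "card B = FS.dim V"
    using FS.basis_exists[of V] by blast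
  have spW: "FS.span B \<subseteq> W"
    using B(1) VW W by (meson FS.span_minimal order_trans)
  have injB: "inj_on f (FS.span B)" using inj spW by (rule inj_on_subset)
  have indf: "FS.independent (f ` B)"
    by (rule P.linear_independent_injective_image[OF lin B(2) injB])
  have spf: "FS.span (f ` B) = f ` FS.span B"
    by (rule P.linear_span_image[OF lin])
  have "FS.dim (f ` V) = card (f ` B)"
    by (rule FS.dim_unique[OF _ _ indf refl]) (use B spf in auto)
  also have "\<dots> = card B"
    by (rule card_image) (use injB FS.span_superset in \<open>auto intro: inj_on_subset\<close>)
  finally show ?thesis using B(4) by (simp add: fdim_def)
qed

lemma linear_bdry: "Vector_Spaces.linear fscale fscale (bdry X S :: (nat \<Rightarrow> 'a::field) \<Rightarrow> _)"
  unfolding Vector_Spaces.linear_iff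
  by (auto simp: vector_space_fscale bdry_def fscale_def fun_eq_iff sum.distrib
                 algebra_simps sum_distrib_left)

lemma bdry_add: "bdry X S (u + v) = bdry X S u + bdry X S v"
  by (auto simp: bdry_def fun_eq_iff sum.distrib algebra_simps)

lemma bdry_uminus: "bdry X S (- v) = - bdry X S v"
  by (auto simp: bdry_def fun_eq_iff sum_negf)

lemma bdry_zero[simp]: "bdry X S 0 = 0"
  by (auto simp: bdry_def fun_eq_iff)

lemma bdry_in_chains: "bdry X S v \<in> chains S"
  by (auto simp: bdry_def chains_def)

lemma bdry_cong:
  assumes "\<And>i j. i \<in> S \<Longrightarrow> j \<in> S \<Longrightarrow> X i j = Y i j" "\<And>j. j \<in> S \<Longrightarrow> u j = v j"
  shows "bdry X S u = bdry Y S v"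
  using assms by (auto simp: bdry_def fun_eq_iff intro!: sum.cong)

lemma bdry_bdry:
  assumes "finite S"
  shows "bdry X S (bdry Y S v) = bdry (\<lambda>i k. \<Sum>j\<in>S. X i j * Y j k) S v"
proof
  fix i
  show "bdry X S (bdry Y S v) i = bdry (\<lambda>i k. \<Sum>j\<in>S. X i j * Y j k) S v i"
  proof (cases "i \<in> S")
    case True
    have "bdry X S (bdry Y S v) i = (\<Sum>j\<in>S. X i j * (\<Sum>k\<in>S. Y j k * v k))"
      using True by (auto simp: bdry_def intro!: sum.cong)
    also have "\<dots> = (\<Sum>j\<in>S. \<Sum>k\<in>S. X i j * Y j k * v k)"
      by (simp add: sum_distrib_left mult.assoc)
    also have "\<dots> = (\<Sum>k\<in>S. \<Sum>j\<in>S. X i j * Y j k * v k)"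
      by (rule sum.swap)
    also have "\<dots> = (\<Sum>k\<in>S. (\<Sum>j\<in>S. X i j * Y j k) * v k)"
      by (simp add: sum_distrib_right)
    finally show ?thesis using True by (simp add: bdry_def)
  qed (simp add: bdry_def)
qed

lemma bdry_id:
  assumes "finite S" "v \<in> chains S" "\<And>i k. i \<in> S \<Longrightarrow> k \<in> S \<Longrightarrow> X i k = (if i = k then 1 else 0)"
  shows "bdry X S v = v"
proof
  fix i show "bdry X S v i = v i"
    using assms by (auto simp: bdry_def chains_def sum_delta_mult cong: sum.cong)
qed

definition upper :: "nat \<Rightarrow> (nat \<Rightarrow> nat \<Rightarrow> 'a::zero) \<Rightarrow> bool" where
  "upper N X \<longleftrightarrow> (\<forall>i\<in>{1..N}. \<forall>j\<in>{1..N}. X i j \<noteq> 0 \<longrightarrow> i \<le> j)"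

definition gradedm :: "nat \<Rightarrow> (nat \<Rightarrow> int) \<Rightarrow> (nat \<Rightarrow> nat \<Rightarrow> 'a::zero) \<Rightarrow> bool" where
  "gradedm N deg X \<longleftrightarrow> (\<forall>i\<in>{1..N}. \<forall>j\<in>{1..N}. X i j \<noteq> 0 \<longrightarrow> deg i = deg j)"

definition isinv :: "nat \<Rightarrow> (nat \<Rightarrow> nat \<Rightarrow> 'a::field) \<Rightarrow> (nat \<Rightarrow> nat \<Rightarrow> 'a) \<Rightarrow> bool" where
  "isinv N X Y \<longleftrightarrow> (\<forall>i\<in>{1..N}. \<forall>k\<in>{1..N}. matmul N X Y i k = (if i = k then 1 else 0))"

lemma matmul_restrict:
  assumes "upper N X" "upper N Y" "1 \<le> a" "b \<le> N" "i \<in> {a..b}" "k \<in> {a..b}"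
  shows "matmul N X Y i k = (\<Sum>j\<in>{a..b}. X i j * Y j k)"
  unfolding matmul_def
proof (rule sum.mono_neutral_right)
  show "\<forall>j\<in>{1..N} - {a..b}. X i j * Y j k = 0"
  proof
    fix j assume j: "j \<in> {1..N} - {a..b}"
    have iN: "i \<in> {1..N}" "k \<in> {1..N}" using assms by auto
    show "X i j * Y j k = 0"
    proof (cases "j < a")
      case True then have "\<not> i \<le> j" using assms by auto
      then have "X i j = 0" using assms(1) iN j unfolding upper_def by blast
      then show ?thesis by simp
    next
      case False then have "\<not> j \<le> k" using assms j by auto
      then have "Y j k = 0" using assms(2) iN j unfolding upper_def by blast
      then show ?thesis by simp
    qed
  qed
qed (use assms in auto)

lemma bdry_bdry_matmul:
  assumes "upper N X" "upper N Y" "1 \<le> a" "b \<le> N"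
  shows "bdry X {a..b} (bdry Y {a..b} v) = bdry (matmul N X Y) {a..b} v"
  unfolding bdry_bdry[OF finite_atLeastAtMost]
  by (rule bdry_cong) (use matmul_restrict[OF assms] in auto)

lemma matmul_assoc: "matmul N (matmul N X Y) Z = matmul N X (matmul N Y Z)"
proof (intro ext)
  fix i k
  have "matmul N (matmul N X Y) Z i k = (\<Sum>j\<in>{1..N}. \<Sum>m\<in>{1..N}. X i m * Y m j * Z j k)"
    by (simp add: matmul_def sum_distrib_right)
  also have "\<dots> = (\<Sum>m\<in>{1..N}. \<Sum>j\<in>{1..N}. X i m * Y m j * Z j k)"
    by (rule sum.swap)
  also have "\<dots> = matmul N X (matmul N Y Z) i k"
    by (simp add: matmul_def sum_distrib_left mult.assoc)
  finally show "matmul N (matmul N X Y) Z i k = matmul N X (matmul N Y Z) i k" .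
qed

lemma matmul_cong:
  assumes "\<And>i j. i \<in> {1..N} \<Longrightarrow> j \<in> {1..N} \<Longrightarrow> X i j = X' i j"
    "\<And>i j. i \<in> {1..N} \<Longrightarrow> j \<in> {1..N} \<Longrightarrow> Y i j = Y' i j"
    "i \<in> {1..N}" "k \<in> {1..N}"
  shows "matmul N X Y i k = matmul N X' Y' i k"
  using assms unfolding matmul_def by (auto intro!: sum.cong)

lemma matmul_id_left:
  assumes "isinv N A B" "i \<in> {1..N}" "k \<in> {1..N}"
  shows "matmul N (matmul N A B) Z i k = Z i k"
proof -
  have "matmul N (matmul N A B) Z i k = (\<Sum>x\<in>{1..N}. (if i = x then 1 else 0) * Z x k)"
    unfolding matmul_def[of N "matmul N A B"]
    by (rule sum.cong) (use assms in \<open>auto simp: isinv_def\<close>)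
  then show ?thesis using assms by (simp add: sum_delta_mult)
qed

lemma matmul_id_right:
  assumes "isinv N A B" "i \<in> {1..N}" "k \<in> {1..N}"
  shows "matmul N Z (matmul N A B) i k = Z i k"
proof -
  have "matmul N Z (matmul N A B) i k = (\<Sum>x\<in>{1..N}. Z i x * (if x = k then 1 else 0))"
    unfolding matmul_def[of N Z]
    by (rule sum.cong) (use assms in \<open>auto simp: isinv_def\<close>)
  then show ?thesis using assms by (simp add: sum_delta_mult)
qed

lemma M_diff_upper: "M_differential N deg d \<Longrightarrow> upper N d"
  unfolding M_differential_def upper_def by force

lemma bdry_prefix:
  assumes "upper N X" "j \<le> N" "v \<in> chains {1..j}"
  shows "bdry X {1..j} v = bdry X {1..N} v"
proof
  fix i
  show "bdry X {1..j} v i = bdry X {1..N} v i"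
  proof (cases "i \<in> {1..j}")
    case True
    have "(\<Sum>k\<in>{1..j}. X i k * v k) = (\<Sum>k\<in>{1..N}. X i k * v k)"
      by (rule sum.mono_neutral_left) (use assms in \<open>auto simp: chains_def\<close>)
    then show ?thesis using True assms by (auto simp: bdry_def)
  next
    case False
    have "(\<Sum>k\<in>{1..N}. X i k * v k) = 0" if "i \<in> {1..N}"
    proof (rule sum.neutral, rule ballI)
      fix k assume k: "k \<in> {1..N}"
      show "X i k * v k = 0"
      proof (cases "k \<le> j")
        case True then have "X i k = 0" using assms(1) False that k unfolding upper_def by fastforce
        then show ?thesis by simp
      next
        case False then show ?thesis using assms(3) by (simp add: chains_def)
      qed
    qed
    then show ?thesis using False by (auto simp: bdry_def)
  qed
qed

lemma chains_deg_sub: "chains_deg deg S l \<subseteq> chains S"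
  by (auto simp: chains_deg_def chains_def)

definition tri_family :: "nat \<Rightarrow> (nat \<Rightarrow> nat \<Rightarrow> 'a::field) \<Rightarrow> bool" where
  "tri_family k b \<longleftrightarrow> (\<forall>j\<in>{1..k}. b j \<in> chains {1..j} \<and> b j j \<noteq> 0)"

lemma tri_family_mono: "tri_family (Suc k) b \<Longrightarrow> tri_family k b"
  by (auto simp: tri_family_def)

lemma tri_span:
  assumes "tri_family k b" "v \<in> chains {1..k}"
  shows "\<exists>c. \<forall>n. v n = (\<Sum>i\<in>{1..k}. c i * b i n)"
  using assms
proof (induction k arbitrary: v)
  case 0
  then show ?case by (auto simp: chains_def)
next
  case (Suc k)
  define a where "a = v (Suc k) / b (Suc k) (Suc k)"
  define v' where "v' = (\<lambda>n. v n - a * b (Suc k) n)"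
  have bk: "b (Suc k) \<in> chains {1..Suc k}" "b (Suc k) (Suc k) \<noteq> 0"
    using Suc.prems by (auto simp: tri_family_def)
  have "v' \<in> chains {1..k}"
    unfolding chains_def
  proof (intro CollectI allI impI)
    fix n assume n: "n \<notin> {1..k}"
    show "v' n = 0"
    proof (cases "n = Suc k")
      case True then show ?thesis using bk by (simp add: v'_def a_def)
    next
      case False
      then have "n \<notin> {1..Suc k}" using n by auto
      then show ?thesis using Suc.prems(2) bk(1) by (simp add: v'_def chains_def)
    qed
  qed
  then obtain c where c: "\<forall>n. v' n = (\<Sum>i\<in>{1..k}. c i * b i n)"
    using Suc.IH tri_family_mono[OF Suc.prems(1)] by blast
  define c' where "c' = c(Suc k := a)"
  have "\<forall>n. v n = (\<Sum>i\<in>{1..Suc k}. c' i * b i n)"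
  proof
    fix n
    have "(\<Sum>i\<in>{1..Suc k}. c' i * b i n) = c' (Suc k) * b (Suc k) n + (\<Sum>i\<in>{1..k}. c' i * b i n)"
      by (simp add: atLeastAtMostSuc_conv)
    also have "(\<Sum>i\<in>{1..k}. c' i * b i n) = (\<Sum>i\<in>{1..k}. c i * b i n)"
      by (rule sum.cong) (auto simp: c'_def)
    finally show "v n = (\<Sum>i\<in>{1..Suc k}. c' i * b i n)"
      using c[rule_format, of n] by (simp add: c'_def v'_def algebra_simps)
  qed
  then show ?case by blast
qed

lemma tri_indep:
  assumes "tri_family k b" "\<forall>n. (\<Sum>i\<in>{1..k}. c i * b i n) = 0"
  shows "\<forall>i\<in>{1..k}. c i = 0"
  using assms
proof (induction k)
  case 0
  then show ?case by simp
next
  case (Suc k)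
  have bk: "b (Suc k) (Suc k) \<noteq> 0"
    using Suc.prems by (auto simp: tri_family_def)
  have z: "b i (Suc k) = 0" if "i \<in> {1..k}" for i
    using Suc.prems(1) that unfolding tri_family_def chains_def by auto
  have "0 = (\<Sum>i\<in>{1..Suc k}. c i * b i (Suc k))" using Suc.prems(2) by simp
  also have "\<dots> = c (Suc k) * b (Suc k) (Suc k) + (\<Sum>i\<in>{1..k}. c i * b i (Suc k))"
    by (simp add: atLeastAtMostSuc_conv)
  also have "(\<Sum>i\<in>{1..k}. c i * b i (Suc k)) = 0"
    using z by simp
  finally have ck: "c (Suc k) = 0" using bk by simp
  have "\<forall>n. (\<Sum>i\<in>{1..k}. c i * b i n) = 0"
  proof
    fix n
    have "0 = (\<Sum>i\<in>{1..Suc k}. c i * b i n)" using Suc.prems(2) by simp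
    also have "\<dots> = (\<Sum>i\<in>{1..k}. c i * b i n)"
      using ck by (simp add: atLeastAtMostSuc_conv)
    finally show "(\<Sum>i\<in>{1..k}. c i * b i n) = 0" by simp
  qed
  then have "\<forall>i\<in>{1..k}. c i = 0"
    using Suc.IH tri_family_mono[OF Suc.prems(1)] by blast
  then show ?case using ck by (auto simp: le_Suc_eq)
qed

lemma tri_span_graded:
  assumes "tri_family k b" "\<forall>j\<in>{1..k}. b j \<in> chains_deg deg UNIV (deg j)"
    "v \<in> chains {1..k}" "v \<in> chains_deg deg UNIV l"
  shows "\<exists>c. (\<forall>i. c i \<noteq> 0 \<longrightarrow> deg i = l) \<and> (\<forall>n. v n = (\<Sum>i\<in>{1..k}. c i * b i n))"
proof -
  obtain c where c: "\<forall>n. v n = (\<Sum>i\<in>{1..k}. c i * b i n)"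
    using tri_span[OF assms(1,3)] by blast
  define c' where "c' i = (if deg i = l then c i else 0)" for i
  have "\<forall>n. v n = (\<Sum>i\<in>{1..k}. c' i * b i n)"
  proof
    fix n
    show "v n = (\<Sum>i\<in>{1..k}. c' i * b i n)"
    proof (cases "deg n = l")
      case True
      have "(\<Sum>i\<in>{1..k}. c' i * b i n) = (\<Sum>i\<in>{1..k}. c i * b i n)"
      proof (rule sum.cong)
        fix i assume "i \<in> {1..k}"
        then have "b i \<in> chains_deg deg UNIV (deg i)" using assms(2) by blast
        then have "b i n \<noteq> 0 \<Longrightarrow> deg i = l" using True
          unfolding chains_deg_def by force
        then show "c' i * b i n = c i * b i n" by (cases "b i n = 0") (auto simp: c'_def)
      qed simp
      then show ?thesis using c by simp
    next
      case False
      have "v n = 0" using assms(4) False by (auto simp: chains_deg_def)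
      moreover have "(\<Sum>i\<in>{1..k}. c' i * b i n) = 0"
      proof (rule sum.neutral, rule ballI)
        fix i assume "i \<in> {1..k}"
        then have "b i \<in> chains_deg deg UNIV (deg i)" using assms(2) by blast
        then have "b i n \<noteq> 0 \<Longrightarrow> deg i \<noteq> l" using False
          unfolding chains_deg_def by auto
        then show "c' i * b i n = 0" by (cases "b i n = 0") (auto simp: c'_def)
      qed
      ultimately show ?thesis by simp
    qed
  qed
  moreover have "\<forall>i. c' i \<noteq> 0 \<longrightarrow> deg i = l" by (simp add: c'_def)
  ultimately show ?thesis by blast
qed

lemma bdry_lincomb:
  assumes "finite I"
  shows "bdry X S (\<lambda>n. \<Sum>i\<in>I. c i * b i n) = (\<lambda>n. \<Sum>i\<in>I. c i * bdry X S (b i) n)"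
proof
  fix n
  show "bdry X S (\<lambda>n. \<Sum>i\<in>I. c i * b i n) n = (\<Sum>i\<in>I. c i * bdry X S (b i) n)"
  proof (cases "n \<in> S")
    case True
    have "(\<Sum>j\<in>S. X n j * (\<Sum>i\<in>I. c i * b i j)) = (\<Sum>j\<in>S. \<Sum>i\<in>I. c i * (X n j * b i j))"
      by (simp add: sum_distrib_left algebra_simps)
    also have "\<dots> = (\<Sum>i\<in>I. \<Sum>j\<in>S. c i * (X n j * b i j))" by (rule sum.swap)
    also have "\<dots> = (\<Sum>i\<in>I. c i * (\<Sum>j\<in>S. X n j * b i j))" by (simp add: sum_distrib_left)
    finally show ?thesis using True by (simp add: bdry_def)
  qed (simp add: bdry_def)
qed

lemma chains_deg_UNIV: "chains_deg deg S l \<subseteq> chains_deg deg UNIV l"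
  by (auto simp: chains_deg_def)

lemma bdry_diff: "bdry X S (u - v) = bdry X S u - bdry X S v"
  by (auto simp: bdry_def fun_eq_iff sum_subtractf algebra_simps)

lemma ev_chains_deg: "K \<ge> 1 \<Longrightarrow> ev K \<in> chains_deg deg {1..K} (deg K)"
  by (auto simp: ev_def chains_deg_def)

locale mdiff =
  fixes N :: nat and deg :: "nat \<Rightarrow> int" and d :: "nat \<Rightarrow> nat \<Rightarrow> 'a::field"
  assumes Md: "M_differential N deg d"
begin

abbreviation D where "D \<equiv> bdry d {1..N}"

lemma upper_d: "upper N d" using M_diff_upper[OF Md] .

lemma dd0: "i \<in> {1..N} \<Longrightarrow> k \<in> {1..N} \<Longrightarrow> matmul N d d i k = 0"
  using Md unfolding M_differential_def matmul_def by auto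

lemma DD: "D (D v) = 0"
proof -
  have "D (D v) = bdry (matmul N d d) {1..N} v"
    by (rule bdry_bdry_matmul[OF upper_d upper_d]) auto
  also have "\<dots> = bdry (\<lambda>_ _. 0) {1..N} v"
    by (rule bdry_cong) (auto simp: dd0)
  also have "\<dots> = 0" by (simp add: bdry_def fun_eq_iff)
  finally show ?thesis .
qed

lemma dnz: "d i j \<noteq> 0 \<Longrightarrow> 1 \<le> i \<and> i < j \<and> j \<le> N \<and> deg i = deg j - 1"
  using Md unfolding M_differential_def by blast

lemma D_chains: "v \<in> chains {1..Suc k} \<Longrightarrow> D v \<in> chains {1..k}"
proof -
  assume v: "v \<in> chains {1..Suc k}"
  { fix i assume i: "i \<notin> {1..k}"
    have "(\<Sum>j\<in>{1..N}. d i j * v j) = 0"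
    proof (rule sum.neutral, rule ballI)
      fix j assume "j \<in> {1..N}"
      show "d i j * v j = 0"
      proof (cases "d i j = 0")
        case False
        then have "1 \<le> i" "i < j" using dnz by auto
        then have "j \<notin> {1..Suc k}" using i by auto
        then show ?thesis using v by (simp add: chains_def)
      qed simp
    qed }
  then show ?thesis by (auto simp: chains_def bdry_def)
qed

lemma D_deg: "v \<in> chains_deg deg S l \<Longrightarrow> D v \<in> chains_deg deg UNIV (l - 1)"
proof -
  assume v: "v \<in> chains_deg deg S l"
  { fix i assume i: "deg i \<noteq> l - 1"
    have "(\<Sum>j\<in>{1..N}. d i j * v j) = 0"
    proof (rule sum.neutral, rule ballI)
      fix j assume "j \<in> {1..N}"
      show "d i j * v j = 0"
      proof (cases "d i j = 0")
        case False
        then have "deg i = deg j - 1" using dnz by auto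
        then have "deg j \<noteq> l" using i by auto
        then show ?thesis using v by (simp add: chains_deg_def)
      qed simp
    qed }
  then show ?thesis by (auto simp: chains_deg_def bdry_def)
qed

definition good :: "nat \<Rightarrow> (nat \<Rightarrow> nat \<Rightarrow> 'a) \<Rightarrow> nat set \<Rightarrow> (nat \<Rightarrow> nat) \<Rightarrow> bool" where
  "good k b Dm t \<longleftrightarrow> Dm \<subseteq> {1..k} \<and> inj_on t Dm \<and>
     (\<forall>j\<in>{1..k}. b j \<in> chains_deg deg {1..j} (deg j) \<and> b j j \<noteq> 0) \<and>
     (\<forall>j\<in>Dm. t j \<in> {1..k} \<and> t j < j \<and> deg (t j) = deg j - 1 \<and> D (b j) = b (t j)) \<and>
     (\<forall>j\<in>{1..k} - Dm. D (b j) = 0)"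

lemma goodI:
  assumes "Dm \<subseteq> {1..k}" "inj_on t Dm"
    "\<And>j. j \<in> {1..k} \<Longrightarrow> b j \<in> chains_deg deg {1..j} (deg j) \<and> b j j \<noteq> 0"
    "\<And>j. j \<in> Dm \<Longrightarrow> t j \<in> {1..k} \<and> t j < j \<and> deg (t j) = deg j - 1 \<and> D (b j) = b (t j)"
    "\<And>j. j \<in> {1..k} - Dm \<Longrightarrow> D (b j) = 0"
  shows "good k b Dm t"
  using assms unfolding good_def by blast

lemma good_tri: "good k b Dm t \<Longrightarrow> tri_family k b"
  unfolding good_def tri_family_def using chains_deg_sub by blast

lemma good_gr: "good k b Dm t \<Longrightarrow> \<forall>j\<in>{1..k}. b j \<in> chains_deg deg UNIV (deg j)"
  unfolding good_def using chains_deg_UNIV by blast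


lemma good_step:
  assumes G: "good k b Dm t" and kN: "Suc k \<le> N"
  shows "\<exists>b' Dm' t'. good (Suc k) b' Dm' t'"
proof -
  define K where "K = Suc k"
  have GDm: "Dm \<subseteq> {1..k}" and Ginj: "inj_on t Dm"
    and Gb: "\<And>j. j \<in> {1..k} \<Longrightarrow> b j \<in> chains_deg deg {1..j} (deg j) \<and> b j j \<noteq> 0"
    and Gt: "\<And>j. j \<in> Dm \<Longrightarrow> t j \<in> {1..k} \<and> t j < j \<and> deg (t j) = deg j - 1 \<and> D (b j) = b (t j)"
    and G0: "\<And>j. j \<in> {1..k} - Dm \<Longrightarrow> D (b j) = 0"
    using G unfolding good_def by blast+
  have finDm: "finite Dm" using GDm finite_subset by blast
  have tri: "tri_family k b" by (rule good_tri[OF G])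
  have bch: "b j n = 0" if "j \<in> {1..k}" "n \<notin> {1..j}" for j n
    using Gb[OF that(1)] that(2) by (auto simp: chains_deg_def)
  have bdg: "b j n = 0" if "j \<in> {1..k}" "deg n \<noteq> deg j" for j n
    using Gb[OF that(1)] that(2) by (auto simp: chains_deg_def)
  define c where "c = D (ev K)"
  have c_ch: "c \<in> chains {1..k}"
    unfolding c_def K_def by (rule D_chains) (use ev_chains_deg[of "Suc k" deg] chains_deg_sub in auto)
  have c_deg: "c \<in> chains_deg deg UNIV (deg K - 1)"
    unfolding c_def by (rule D_deg[OF ev_chains_deg]) (simp add: K_def)
  obtain lam where lg: "\<And>i. lam i \<noteq> 0 \<Longrightarrow> deg i = deg K - 1"
    and lc: "\<And>n. c n = (\<Sum>i\<in>{1..k}. lam i * b i n)"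
    using tri_span_graded[OF tri good_gr[OF G] c_ch c_deg] by blast
  have c_eq: "c = (\<lambda>n. \<Sum>i\<in>{1..k}. lam i * b i n)" using lc by auto
  have Dc0: "D c = 0" unfolding c_def by (rule DD)
  have Dsplit: "(\<Sum>i\<in>{1..k}. lam i * D (b i) n) = (\<Sum>i\<in>Dm. lam i * b (t i) n)" for n
  proof -
    have "(\<Sum>i\<in>{1..k}. lam i * D (b i) n) = (\<Sum>i\<in>Dm. lam i * D (b i) n) + (\<Sum>i\<in>{1..k} - Dm. lam i * D (b i) n)"
      using GDm by (simp add: sum.subset_diff)
    also have "(\<Sum>i\<in>{1..k} - Dm. lam i * D (b i) n) = 0"
      using G0 by simp
    also have "(\<Sum>i\<in>Dm. lam i * D (b i) n) = (\<Sum>i\<in>Dm. lam i * b (t i) n)"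
      using Gt by simp
    finally show ?thesis by simp
  qed
  have Dc: "D c n = (\<Sum>i\<in>Dm. lam i * b (t i) n)" for n
    unfolding c_eq bdry_lincomb[OF finite_atLeastAtMost] using Dsplit by simp
  have tDm: "t ` Dm \<subseteq> {1..k}" using Gt by auto
  have reidx: "(\<Sum>i\<in>t ` Dm. f i) = (\<Sum>j\<in>Dm. f (t j))" for f :: "nat \<Rightarrow> 'a"
    by (rule sum.reindex[OF Ginj, unfolded comp_def])
  define mu where "mu i = (if i \<in> t ` Dm then lam (inv_into Dm t i) else 0)" for i
  have mu_sum: "(\<Sum>i\<in>{1..k}. mu i * b i n) = (\<Sum>j\<in>Dm. lam j * b (t j) n)" for n
  proof -
    have "(\<Sum>i\<in>{1..k}. mu i * b i n) = (\<Sum>i\<in>{1..k}. if i \<in> t ` Dm then lam (inv_into Dm t i) * b i n else 0)"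
      by (rule sum.cong) (auto simp: mu_def)
    also have "\<dots> = (\<Sum>i\<in>{1..k} \<inter> t ` Dm. lam (inv_into Dm t i) * b i n)"
      by (rule sum.inter_restrict[symmetric]) simp
    also have "{1..k} \<inter> t ` Dm = t ` Dm" using tDm by blast
    also have "(\<Sum>i\<in>t ` Dm. lam (inv_into Dm t i) * b i n) = (\<Sum>j\<in>Dm. lam (inv_into Dm t (t j)) * b (t j) n)"
      by (rule reidx)
    also have "\<dots> = (\<Sum>j\<in>Dm. lam j * b (t j) n)"
      by (rule sum.cong) (auto simp: inv_into_f_f[OF Ginj])
    finally show ?thesis .
  qed
  have mu0: "\<forall>i\<in>{1..k}. mu i = 0"
    by (rule tri_indep[OF tri]) (use mu_sum Dc Dc0 in \<open>auto simp: fun_eq_iff\<close>)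
  have lamDm: "lam j = 0" if "j \<in> Dm" for j
  proof -
    have "mu (t j) = 0" using mu0 tDm that by auto
    then show ?thesis using that by (simp add: mu_def inv_into_f_f[OF Ginj])
  qed
  define w where "w = (\<lambda>n. \<Sum>j\<in>Dm. lam (t j) * b j n)"
  have Dw: "D w = (\<lambda>n. \<Sum>j\<in>Dm. lam (t j) * b (t j) n)"
    unfolding w_def bdry_lincomb[OF finDm] using Gt by simp
  define lam' where "lam' i = (if i \<in> t ` Dm then 0 else lam i)" for i
  define r where "r = (\<lambda>n. \<Sum>i\<in>{1..k}. lam' i * b i n)"
  have c_split: "c = D w + r"
  proof
    fix n
    have "c n = (\<Sum>i\<in>{1..k}. (if i \<in> t ` Dm then lam i * b i n else 0) + lam' i * b i n)"
      unfolding lc by (rule sum.cong) (auto simp: lam'_def)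
    also have "\<dots> = (\<Sum>i\<in>{1..k}. if i \<in> t ` Dm then lam i * b i n else 0) + r n"
      by (simp add: sum.distrib r_def)
    also have "(\<Sum>i\<in>{1..k}. if i \<in> t ` Dm then lam i * b i n else 0) = (\<Sum>i\<in>{1..k} \<inter> t ` Dm. lam i * b i n)"
      by (rule sum.inter_restrict[symmetric]) simp
    also have "{1..k} \<inter> t ` Dm = t ` Dm" using tDm by blast
    also have "(\<Sum>i\<in>t ` Dm. lam i * b i n) = D w n"
      unfolding Dw reidx ..
    finally show "c n = (D w + r) n" by simp
  qed
  have lam'_nz: "i \<notin> Dm \<and> i \<notin> t ` Dm \<and> deg i = deg K - 1" if "lam' i \<noteq> 0" for i
    using that lamDm lg by (auto simp: lam'_def split: if_splits)
  have w_ch: "w \<in> chains_deg deg {1..k} (deg K)"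
    unfolding chains_deg_def
  proof (intro CollectI allI impI)
    fix n assume n: "n \<notin> {1..k} \<or> deg n \<noteq> deg K"
    show "w n = 0" unfolding w_def
    proof (rule sum.neutral, rule ballI)
      fix j assume j: "j \<in> Dm"
      have jk: "j \<in> {1..k}" using j GDm by auto
      show "lam (t j) * b j n = 0"
      proof (cases "lam (t j) = 0")
        case False
        then have "deg (t j) = deg K - 1" by (rule lg)
        then have "deg j = deg K" using Gt[OF j] by simp
        moreover have "j \<le> k" using jk by simp
        ultimately have "n \<notin> {1..j} \<or> deg n \<noteq> deg j" using n by auto
        then have "b j n = 0" using bch[OF jk] bdg[OF jk] by blast
        then show ?thesis by simp
      qed simp
    qed
  qed
  define bK where "bK = ev K - w"
  have bK_ch: "bK \<in> chains_deg deg {1..K} (deg K)"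
    using w_ch ev_chains_deg[of K deg] by (auto simp: bK_def chains_deg_def K_def)
  have bK_K: "bK K \<noteq> 0"
    using w_ch by (auto simp: bK_def chains_deg_def K_def ev_def)
  have DbK: "D bK = r"
    unfolding bK_def bdry_diff c_def[symmetric] c_split by simp
  show ?thesis
  proof (cases "\<forall>i\<in>{1..k}. lam' i = 0")
    case True
    then have r0: "r = 0" by (simp add: r_def fun_eq_iff)
    define b' where "b' = b(K := bK)"
    have "good (Suc k) b' Dm t"
    proof (rule goodI)
      show "Dm \<subseteq> {1..Suc k}" using GDm by auto
      show "inj_on t Dm" by (rule Ginj)
      fix j assume j: "j \<in> {1..Suc k}"
      show "b' j \<in> chains_deg deg {1..j} (deg j) \<and> b' j j \<noteq> 0"
      proof (cases "j = K")
        case True then show ?thesis using bK_ch bK_K by (simp add: b'_def)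
      next
        case False then have "j \<in> {1..k}" using j by (auto simp: K_def)
        then show ?thesis using Gb False by (simp add: b'_def)
      qed
    next
      fix j assume j: "j \<in> Dm"
      have "j \<noteq> K" "t j \<noteq> K" using j GDm Gt[OF j] by (auto simp: K_def)
      then show "t j \<in> {1..Suc k} \<and> t j < j \<and> deg (t j) = deg j - 1 \<and> D (b' j) = b' (t j)"
        using Gt[OF j] by (auto simp: b'_def)
    next
      fix j assume j: "j \<in> {1..Suc k} - Dm"
      show "D (b' j) = 0"
      proof (cases "j = K")
        case True then show ?thesis using DbK r0 by (simp add: b'_def)
      next
        case False then show ?thesis using j G0 by (auto simp: b'_def K_def)
      qed
    qed
    then show ?thesis by blast
  next
    case False
    define Pset where "Pset = {i\<in>{1..k}. lam' i \<noteq> 0}"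
    have Pne: "Pset \<noteq> {}" and Pfin: "finite Pset" using False by (auto simp: Pset_def)
    define p where "p = Max Pset"
    have pP: "p \<in> Pset" unfolding p_def using Pne Pfin by (rule Max_in[rotated])
    have pmax: "lam' i = 0" if "i \<in> {1..k}" "i > p" for i
    proof (rule ccontr)
      assume "lam' i \<noteq> 0"
      then have "i \<in> Pset" using that by (simp add: Pset_def)
      then have "i \<le> p" unfolding p_def using Max_ge[OF Pfin] by blast
      then show False using that by simp
    qed
    have pk: "p \<in> {1..k}" and lp: "lam' p \<noteq> 0" using pP by (auto simp: Pset_def)
    have pinfo: "p \<notin> Dm" "p \<notin> t ` Dm" "deg p = deg K - 1" using lam'_nz[OF lp] by auto
    have r_ch: "r \<in> chains_deg deg {1..p} (deg p)"
      unfolding chains_deg_def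
    proof (intro CollectI allI impI)
      fix n assume n: "n \<notin> {1..p} \<or> deg n \<noteq> deg p"
      show "r n = 0" unfolding r_def
      proof (rule sum.neutral, rule ballI)
        fix i assume i: "i \<in> {1..k}"
        show "lam' i * b i n = 0"
        proof (cases "lam' i = 0")
          case False
          then have "i \<le> p" using pmax[OF i] by force
          moreover have "deg i = deg p" using lam'_nz[OF False] pinfo by simp
          ultimately have "n \<notin> {1..i} \<or> deg n \<noteq> deg i" using n by auto
          then have "b i n = 0" using bch[OF i] bdg[OF i] by blast
          then show ?thesis by simp
        qed simp
      qed
    qed
    have r_p: "r p \<noteq> 0"
    proof -
      have "r p = (\<Sum>i\<in>{1..k}. if i = p then lam' p * b p p else 0)"
        unfolding r_def
      proof (rule sum.cong)
        fix i assume i: "i \<in> {1..k}"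
        show "lam' i * b i p = (if i = p then lam' p * b p p else 0)"
        proof (cases "i < p")
          case True then have "b i p = 0" using bch[OF i] by auto
          then show ?thesis using True by simp
        next
          case False then show ?thesis using pmax[OF i] by (cases "i = p") auto
        qed
      qed simp
      also have "\<dots> = lam' p * b p p" using pk by simp
      finally show ?thesis using lp Gb[OF pk] by simp
    qed
    have Dr: "D r = 0"
    proof -
      have "D r = (\<lambda>n. \<Sum>i\<in>{1..k}. lam' i * D (b i) n)"
        unfolding r_def by (rule bdry_lincomb) simp
      also have "\<dots> = (\<lambda>n. 0)"
      proof (rule ext, rule sum.neutral, rule ballI)
        fix n i assume i: "i \<in> {1..k}"
        show "lam' i * D (b i) n = 0"
        proof (cases "lam' i = 0")
          case False
          then have "i \<notin> Dm" using lam'_nz by blast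
          then show ?thesis using G0 i by simp
        qed simp
      qed
      finally show ?thesis by (simp add: zero_fun_def)
    qed
    define b' where "b' = b(p := r, K := bK)"
    define t' where "t' = t(K := p)"
    have pK: "p \<noteq> K" using pk by (auto simp: K_def)
    have KDm: "K \<notin> Dm" using GDm by (auto simp: K_def)
    have "good (Suc k) b' (insert K Dm) t'"
    proof (rule goodI)
      show "insert K Dm \<subseteq> {1..Suc k}" using GDm by (auto simp: K_def)
      show "inj_on t' (insert K Dm)"
        using Ginj pinfo(2) KDm by (auto simp: t'_def inj_on_def)
      fix j assume j: "j \<in> {1..Suc k}"
      show "b' j \<in> chains_deg deg {1..j} (deg j) \<and> b' j j \<noteq> 0"
      proof (cases "j = K")
        case True then show ?thesis using bK_ch bK_K by (simp add: b'_def)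
      next
        case False
        then have jk: "j \<in> {1..k}" using j by (auto simp: K_def)
        show ?thesis
        proof (cases "j = p")
          case True then show ?thesis using r_ch r_p pK by (simp add: b'_def)
        next
          case False then show ?thesis using Gb[OF jk] \<open>j \<noteq> K\<close> by (simp add: b'_def)
        qed
      qed
    next
      fix j assume j: "j \<in> insert K Dm"
      show "t' j \<in> {1..Suc k} \<and> t' j < j \<and> deg (t' j) = deg j - 1 \<and> D (b' j) = b' (t' j)"
      proof (cases "j = K")
        case True
        then show ?thesis using pk pinfo DbK pK by (auto simp: t'_def b'_def K_def)
      next
        case False
        then have jD: "j \<in> Dm" using j by auto
        have "j \<noteq> p" using jD pinfo by auto
        moreover have "t j \<noteq> p" using jD pinfo by auto
        moreover have "t j \<noteq> K" using Gt[OF jD] by (auto simp: K_def)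
        ultimately show ?thesis using Gt[OF jD] False by (auto simp: t'_def b'_def)
      qed
    next
      fix j assume j: "j \<in> {1..Suc k} - insert K Dm"
      then have jk: "j \<in> {1..k} - Dm" by (auto simp: K_def)
      show "D (b' j) = 0"
      proof (cases "j = p")
        case True then show ?thesis using Dr pK by (simp add: b'_def)
      next
        case False then show ?thesis using G0[OF jk] jk by (auto simp: b'_def K_def)
      qed
    qed
    then show ?thesis by blast
  qed
qed

lemma good_exists: "k \<le> N \<Longrightarrow> \<exists>b Dm t. good k b Dm t"
proof (induction k)
  case 0
  have "good 0 (\<lambda>_. 0) {} id" by (simp add: good_def)
  then show ?case by blast
next
  case (Suc k)
  then obtain b Dm t where "good k b Dm t" by auto
  then show ?case using good_step Suc.prems by blast
qed


lemma good_disj: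
  assumes G: "good k b Dm t" and j: "j \<in> Dm"
  shows "t j \<notin> Dm"
proof
  assume tj: "t j \<in> Dm"
  have Gt: "\<And>j. j \<in> Dm \<Longrightarrow> t j \<in> {1..k} \<and> t j < j \<and> deg (t j) = deg j - 1 \<and> D (b j) = b (t j)"
    and Gb: "\<And>j. j \<in> {1..k} \<Longrightarrow> b j \<in> chains_deg deg {1..j} (deg j) \<and> b j j \<noteq> 0"
    using G unfolding good_def by blast+
  have "D (D (b j)) = b (t (t j))" using Gt[OF j] Gt[OF tj] by simp
  then have "b (t (t j)) = 0" using DD by simp
  then show False using Gb[of "t (t j)"] Gt[OF tj] by auto
qed

lemma tri_family_le: "tri_family k b \<Longrightarrow> k' \<le> k \<Longrightarrow> tri_family k' b"
  by (auto simp: tri_family_def)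

lemma exists_elementary: "\<exists>e. elementary N deg e \<and> M_equiv N deg d e"
proof -
  obtain b Dm t where G: "good N b Dm t" using good_exists by blast
  have GDm: "Dm \<subseteq> {1..N}" and Ginj: "inj_on t Dm"
    and Gb: "\<And>j. j \<in> {1..N} \<Longrightarrow> b j \<in> chains_deg deg {1..j} (deg j) \<and> b j j \<noteq> 0"
    and Gt: "\<And>j. j \<in> Dm \<Longrightarrow> t j \<in> {1..N} \<and> t j < j \<and> deg (t j) = deg j - 1 \<and> D (b j) = b (t j)"
    and G0: "\<And>j. j \<in> {1..N} - Dm \<Longrightarrow> D (b j) = 0"
    using G unfolding good_def by blast+
  have tri: "tri_family N b" by (rule good_tri[OF G])
  have gr: "\<forall>j\<in>{1..N}. b j \<in> chains_deg deg UNIV (deg j)" by (rule good_gr[OF G])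
  have bch: "b j n = 0" if "j \<in> {1..N}" "n \<notin> {1..j}" for j n
    using Gb[OF that(1)] that(2) by (auto simp: chains_deg_def)
  define e where "e i j = (if j \<in> Dm \<and> t j = i then 1 else 0 :: 'a)" for i j
  define B where "B i j = (if j \<in> {1..N} then b j i else 0)" for i j
  have "\<forall>j\<in>{1..N}. \<exists>c. (\<forall>i. c i \<noteq> 0 \<longrightarrow> deg i = deg j) \<and> (\<forall>n. ev j n = (\<Sum>i\<in>{1..j}. c i * b i n))"
  proof
    fix j assume j: "j \<in> {1..N}"
    show "\<exists>c. (\<forall>i. c i \<noteq> 0 \<longrightarrow> deg i = deg j) \<and> (\<forall>n. ev j n = (\<Sum>i\<in>{1..j}. c i * b i n))"
      by (rule tri_span_graded[OF tri_family_le[OF tri]])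
         (use j gr ev_chains_deg[of j deg] chains_deg_sub[of deg "{1..j}" "deg j"]
              chains_deg_UNIV[of deg "{1..j}" "deg j"] in auto)
  qed
  then obtain mu where mu: "\<And>j. j \<in> {1..N} \<Longrightarrow> (\<forall>i. mu j i \<noteq> 0 \<longrightarrow> deg i = deg j) \<and> (\<forall>n. ev j n = (\<Sum>i\<in>{1..j}. mu j i * b i n))"
    by metis
  define g where "g i j = (if j \<in> {1..N} \<and> i \<in> {1..j} then mu j i else 0)" for i j
  have g_col: "(\<Sum>i\<in>{1..N}. g i j * b i n) = ev j n" if j: "j \<in> {1..N}" for j n
  proof -
    have "(\<Sum>i\<in>{1..N}. g i j * b i n) = (\<Sum>i\<in>{1..j}. g i j * b i n)"
      by (rule sum.mono_neutral_right) (use j in \<open>auto simp: g_def\<close>)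
    also have "\<dots> = (\<Sum>i\<in>{1..j}. mu j i * b i n)"
      by (rule sum.cong) (use j in \<open>auto simp: g_def\<close>)
    finally show ?thesis using mu[OF j] by simp
  qed
  have Bg: "isinv N B g"
    unfolding isinv_def
  proof (intro ballI)
    fix i k assume i: "i \<in> {1..N}" and k: "k \<in> {1..N}"
    have "matmul N B g i k = (\<Sum>j\<in>{1..N}. g j k * b j i)"
      unfolding matmul_def B_def by (rule sum.cong) auto
    also have "\<dots> = ev k i" by (rule g_col[OF k])
    finally show "matmul N B g i k = (if i = k then 1 else 0)" by (simp add: ev_def)
  qed
  have gB: "isinv N g B"
    unfolding isinv_def
  proof (intro ballI)
    fix i k assume i: "i \<in> {1..N}" and k: "k \<in> {1..N}"
    define x where "x i' = matmul N g B i' k - (if i' = k then 1 else 0)" for i'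
    have "\<forall>n. (\<Sum>i'\<in>{1..N}. x i' * b i' n) = 0"
    proof
      fix n
      have "(\<Sum>i'\<in>{1..N}. matmul N g B i' k * b i' n) = (\<Sum>i'\<in>{1..N}. \<Sum>j\<in>{1..N}. g i' j * b k j * b i' n)"
        unfolding matmul_def B_def using k by (simp add: sum_distrib_right)
      also have "\<dots> = (\<Sum>j\<in>{1..N}. \<Sum>i'\<in>{1..N}. g i' j * b k j * b i' n)" by (rule sum.swap)
      also have "\<dots> = (\<Sum>j\<in>{1..N}. b k j * (\<Sum>i'\<in>{1..N}. g i' j * b i' n))"
        by (simp add: sum_distrib_left algebra_simps)
      also have "\<dots> = (\<Sum>j\<in>{1..N}. b k j * ev j n)"
      proof (rule sum.cong)
        fix j assume "j \<in> {1..N}"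
        then show "b k j * (\<Sum>i'\<in>{1..N}. g i' j * b i' n) = b k j * ev j n"
          using g_col[of j n] by simp
      qed simp
      also have "\<dots> = b k n"
        using bch[OF k, of n] k by (auto simp: ev_def sum_delta_mult)
      finally have e1: "(\<Sum>i'\<in>{1..N}. matmul N g B i' k * b i' n) = b k n" .
      have e2: "(\<Sum>i'\<in>{1..N}. (if i' = k then 1 else 0) * b i' n) = b k n"
        using k by (simp add: sum_delta_mult)
      show "(\<Sum>i'\<in>{1..N}. x i' * b i' n) = 0"
        unfolding x_def using e1 e2 by (simp add: algebra_simps sum_subtractf)
    qed
    then have "x i = 0" using tri_indep[OF tri] i by blast
    then show "matmul N g B i k = (if i = k then 1 else 0)" by (simp add: x_def)
  qed
  have dB: "matmul N d B i j = matmul N B e i j" if i: "i \<in> {1..N}" and j: "j \<in> {1..N}" for i j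
  proof -
    have "matmul N d B i j = D (b j) i"
      using i j by (simp add: matmul_def B_def bdry_def)
    also have "\<dots> = (if j \<in> Dm then b (t j) i else 0)"
      using Gt G0 j by auto
    also have "\<dots> = matmul N B e i j"
    proof -
      have "matmul N B e i j = (\<Sum>k\<in>{1..N}. (if k = (if j \<in> Dm then t j else 0) then (if j \<in> Dm then b (t j) i else 0) else 0))"
        unfolding matmul_def B_def e_def by (rule sum.cong) auto
      also have "\<dots> = (if j \<in> Dm then b (t j) i else 0)"
        using Gt by (auto simp: sum.delta')
      finally show ?thesis by simp
    qed
    finally show ?thesis .
  qed
  have conj: "e i j = matmul N (matmul N g d) B i j" if i: "i \<in> {1..N}" and j: "j \<in> {1..N}" for i j
  proof -
    have "matmul N (matmul N g d) B i j = matmul N g (matmul N d B) i j" by (simp add: matmul_assoc)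
    also have "\<dots> = matmul N g (matmul N B e) i j"
      by (rule matmul_cong) (use i j dB in auto)
    also have "\<dots> = matmul N (matmul N g B) e i j" by (simp add: matmul_assoc)
    also have "\<dots> = e i j" by (rule matmul_id_left[OF gB i j])
    finally show ?thesis by simp
  qed
  have Me: "M_differential N deg e"
    unfolding M_differential_def
  proof (rule conjI; intro allI impI)
    fix i j assume "e i j \<noteq> 0"
    then have "j \<in> Dm" "t j = i" by (auto simp: e_def split: if_splits)
    then show "1 \<le> i \<and> i < j \<and> j \<le> N \<and> deg i = deg j - 1" using Gt GDm by force
  next
    fix i k
    show "(\<Sum>j\<in>{1..N}. e i j * e j k) = 0"
    proof (rule sum.neutral, rule ballI)
      fix j
      show "e i j * e j k = 0"
        using good_disj[OF G] by (auto simp: e_def)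
    qed
  qed
  have elem: "elementary N deg e"
    unfolding elementary_def
  proof (intro conjI ballI impI)
    show "M_differential N deg e" by (rule Me)
  next
    fix j assume j: "j \<in> {1..N}"
    show "(\<forall>i. e i j = 0) \<or> (\<exists>i\<in>{1..N}. \<forall>k. e k j = (if k = i then 1 else 0))"
    proof (cases "j \<in> Dm")
      case True then show ?thesis using Gt[OF True] by (auto simp: e_def)
    qed (auto simp: e_def)
  next
    fix x y z assume "x \<in> {1..N}" "y \<in> {1..N}" "z \<in> {1..N}"
      and h: "(\<forall>k. e k x = (if k = z then 1 else 0)) \<and> (\<forall>k. e k y = (if k = z then 1 else 0))"
    then have "e z x = 1" "e z y = 1" by auto
    then have "x \<in> Dm" "y \<in> Dm" "t x = z" "t y = z" by (auto simp: e_def split: if_splits)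
    then show "x = y" using Ginj by (auto simp: inj_on_def)
  qed
  have autg: "autT N deg g"
    unfolding autT_def
  proof (rule conjI; (intro allI impI)?)
    fix i j assume "g i j \<noteq> 0"
    then show "i \<le> j \<and> deg i = deg j" using mu by (auto simp: g_def split: if_splits)
  next
    show "\<exists>h. \<forall>i\<in>{1..N}. \<forall>k\<in>{1..N}. matmul N g h i k = (if i = k then 1 else 0) \<and> matmul N h g i k = (if i = k then 1 else 0)"
      using gB Bg unfolding isinv_def by blast
  qed
  have "M_equiv N deg d e"
    unfolding M_equiv_def
    using Md Me autg gB Bg conj unfolding isinv_def by blast
  then show ?thesis using elem by blast
qed

end

lemma sum_single:
  assumes "finite S" "j0 \<in> S" "\<And>j. j \<in> S \<Longrightarrow> j \<noteq> j0 \<Longrightarrow> f j = 0"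
  shows "sum f S = f j0"
proof -
  have "sum f S = f j0 + sum f (S - {j0})" using assms by (simp add: sum.remove)
  also have "sum f (S - {j0}) = 0" using assms by (intro sum.neutral) auto
  finally show ?thesis by simp
qed

lemma chains_deg_eq: "chains_deg deg S l = chains (S \<inter> {n. deg n = l})"
  by (auto simp: chains_deg_def chains_def)

lemma chains_Int: "chains A \<inter> chains B = chains (A \<inter> B)"
  by (auto simp: chains_def)

lemma chains_inj:
  assumes "(chains A :: (nat \<Rightarrow> 'a::field) set) = chains B"
  shows "A = B"
proof (rule ccontr)
  assume "A \<noteq> B"
  then obtain x where "x \<in> A \<and> x \<notin> B \<or> x \<in> B \<and> x \<notin> A" by blast
  moreover have "(ev x :: nat \<Rightarrow> 'a) \<in> chains C \<longleftrightarrow> x \<in> C" for C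
    by (auto simp: chains_def ev_def)
  ultimately show False using assms by blast
qed

definition sumset :: "(nat \<Rightarrow> 'a::field) set \<Rightarrow> (nat \<Rightarrow> 'a) set \<Rightarrow> (nat \<Rightarrow> 'a) set" where
  "sumset A B = {z + b | z b. z \<in> A \<and> b \<in> B}"

lemma sumset_chains: "sumset (chains A) (chains B) = (chains (A \<union> B) :: (nat \<Rightarrow> 'a::field) set)"
proof
  show "sumset (chains A) (chains B) \<subseteq> chains (A \<union> B)"
    by (auto simp: sumset_def chains_def)
  show "chains (A \<union> B) \<subseteq> (sumset (chains A) (chains B) :: (nat \<Rightarrow> 'a) set)"
  proof
    fix v :: "nat \<Rightarrow> 'a" assume v: "v \<in> chains (A \<union> B)"
    define z where "z n = (if n \<in> A then v n else 0)" for n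
    define b where "b n = (if n \<in> A then 0 else v n)" for n
    have "v = z + b" by (auto simp: z_def b_def fun_eq_iff)
    moreover have "z \<in> chains A" "b \<in> chains B" using v by (auto simp: z_def b_def chains_def)
    ultimately show "v \<in> sumset (chains A) (chains B)" unfolding sumset_def by blast
  qed
qed

locale elem =
  fixes N :: nat and deg :: "nat \<Rightarrow> int" and e :: "nat \<Rightarrow> nat \<Rightarrow> 'a::field"
  assumes El: "elementary N deg e"
begin

definition P :: "nat \<Rightarrow> nat \<Rightarrow> bool" where "P x z \<longleftrightarrow> e z x \<noteq> 0"

lemma Me: "M_differential N deg e" using El unfolding elementary_def by blast

lemma P_range: "P x z \<Longrightarrow> x \<in> {1..N} \<and> z \<in> {1..N} \<and> z < x \<and> deg z = deg x - 1"
  using Me unfolding P_def M_differential_def by force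

lemma col: "x \<in> {1..N} \<Longrightarrow> (\<forall>i. e i x = 0) \<or> (\<exists>i\<in>{1..N}. \<forall>k. e k x = (if k = i then 1 else 0))"
  using El unfolding elementary_def by blast

lemma e_val: "e z x = (if P x z then 1 else 0)"
proof (cases "P x z")
  case True
  then have x: "x \<in> {1..N}" using P_range by blast
  from col[OF x] True obtain i where "\<forall>k. e k x = (if k = i then 1 else 0)"
    unfolding P_def by auto
  then show ?thesis using True unfolding P_def by (auto split: if_splits)
qed (simp add: P_def)

lemma P_fun: "P x z \<Longrightarrow> P x z' \<Longrightarrow> z = z'"
proof -
  assume a: "P x z" "P x z'"
  then have x: "x \<in> {1..N}" using P_range by blast
  from col[OF x] a obtain i where "\<forall>k. e k x = (if k = i then 1 else 0)"
    unfolding P_def by auto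
  then show "z = z'" using a unfolding P_def by (auto split: if_splits)
qed

lemma P_unit: "P x z \<Longrightarrow> \<forall>k. e k x = (if k = z then 1 else 0)"
proof (intro allI)
  fix k assume a: "P x z"
  show "e k x = (if k = z then 1 else 0)"
  proof (cases "k = z")
    case True then show ?thesis using a e_val[of k x] by simp
  next
    case False then have "\<not> P x k" using P_fun[OF a] by blast
    then show ?thesis using False e_val[of k x] by simp
  qed
qed

lemma P_inj: "P x z \<Longrightarrow> P y z \<Longrightarrow> x = y"
proof -
  assume a: "P x z" "P y z"
  have E: "\<forall>x\<in>{1..N}. \<forall>y\<in>{1..N}. \<forall>z\<in>{1..N}.
        (\<forall>k. e k x = (if k = z then 1 else 0)) \<and> (\<forall>k. e k y = (if k = z then 1 else 0)) \<longrightarrow> x = y"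
    using El unfolding elementary_def by (elim conjE)
  have r: "x \<in> {1..N}" "y \<in> {1..N}" "z \<in> {1..N}" using P_range a by blast+
  show "x = y" using E[rule_format, OF r] P_unit[OF a(1)] P_unit[OF a(2)] by blast
qed

lemma P_chain: "P x z \<Longrightarrow> \<not> P z w"
proof
  assume a: "P x z" "P z w"
  have "(\<Sum>j\<in>{1..N}. e w j * e j x) = 0" using Me unfolding M_differential_def by blast
  moreover have "(\<Sum>j\<in>{1..N}. e w j * e j x) = e w z * e z x"
  proof (rule sum_single)
    show "z \<in> {1..N}" using P_range a by blast
    fix j assume "j \<noteq> z" then have "\<not> P x j" using P_fun[OF a(1)] by blast
    then show "e w j * e j x = 0" using e_val[of j x] by simp
  qed simp
  ultimately show False using a e_val by simp
qed

definition Src :: "nat set \<Rightarrow> nat set" where "Src S = {j\<in>S. \<exists>i\<in>S. P j i}"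
definition Tgt :: "nat set \<Rightarrow> nat set" where "Tgt S = {i\<in>S. \<exists>j\<in>S. P j i}"

lemma bdry_tgt:
  assumes "finite S" "i \<in> S" "j \<in> S" "P j i"
  shows "bdry e S v i = v j"
proof -
  have "(\<Sum>j'\<in>S. e i j' * v j') = e i j * v j"
  proof (rule sum_single[OF assms(1,3)])
    fix j' assume "j' \<noteq> j" then have "\<not> P j' i" using P_inj assms(4) by blast
    then show "e i j' * v j' = 0" using e_val[of i j'] by simp
  qed
  then show ?thesis using assms by (simp add: bdry_def e_val)
qed

lemma bdry_non:
  assumes "i \<notin> S \<or> \<not> (\<exists>j\<in>S. P j i)"
  shows "bdry e S v i = 0"
proof (cases "i \<in> S")
  case True
  have "(\<Sum>j\<in>S. e i j * v j) = 0"
  proof (rule sum.neutral, rule ballI)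
    fix j assume "j \<in> S" then have "\<not> P j i" using assms True by blast
    then show "e i j * v j = 0" using e_val[of i j] by simp
  qed
  then show ?thesis by (simp add: bdry_def)
qed (simp add: bdry_def)

definition pre :: "nat set \<Rightarrow> (nat \<Rightarrow> 'a) \<Rightarrow> nat \<Rightarrow> 'a" where
  "pre S w = (\<lambda>j. if j \<in> S then \<Sum>i\<in>S. e i j * w i else 0)"

lemma pre_val:
  assumes "finite S" "i \<in> S" "j \<in> S" "P j i"
  shows "pre S w j = w i"
proof -
  have "(\<Sum>i'\<in>S. e i' j * w i') = e i j * w i"
  proof (rule sum_single[OF assms(1,2)])
    fix i' assume "i' \<noteq> i" then have "\<not> P j i'" using P_fun assms(4) by blast
    then show "e i' j * w i' = 0" using e_val[of i' j] by simp
  qed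
  then show ?thesis using assms by (simp add: pre_def e_val)
qed

lemma pre_non:
  assumes "j \<notin> S \<or> \<not> (\<exists>i\<in>S. P j i)"
  shows "pre S w j = 0"
proof (cases "j \<in> S")
  case True
  have "(\<Sum>i\<in>S. e i j * w i) = 0"
  proof (rule sum.neutral, rule ballI)
    fix i assume "i \<in> S" then have "\<not> P j i" using assms True by blast
    then show "e i j * w i = 0" using e_val[of i j] by simp
  qed
  then show ?thesis by (simp add: pre_def)
qed (simp add: pre_def)

lemma bdry_pre:
  assumes "finite S" "w \<in> chains (Tgt S)"
  shows "bdry e S (pre S w) = w"
proof
  fix i
  show "bdry e S (pre S w) i = w i"
  proof (cases "i \<in> Tgt S")
    case True
    then obtain j where j: "j \<in> S" "P j i" "i \<in> S" unfolding Tgt_def by blast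
    then show ?thesis using bdry_tgt[OF assms(1) j(3,1,2)] pre_val[OF assms(1) j(3,1,2)] by simp
  next
    case False
    then have "w i = 0" using assms(2) by (simp add: chains_def)
    moreover have "bdry e S (pre S w) i = 0"
    proof (cases "i \<in> S")
      case True then show ?thesis using False by (intro bdry_non) (auto simp: Tgt_def)
    qed (intro bdry_non, blast)
    ultimately show ?thesis by simp
  qed
qed

lemma pre_chains: "pre S w \<in> chains S"
  by (simp add: pre_def chains_def)

lemma pre_deg:
  assumes "finite S" "w \<in> chains_deg deg UNIV l"
  shows "pre S w \<in> chains_deg deg S (l + 1)"
  unfolding chains_deg_def
proof (intro CollectI allI impI)
  fix j assume j: "j \<notin> S \<or> deg j \<noteq> l + 1"
  show "pre S w j = 0"
  proof (cases "j \<in> S \<and> (\<exists>i\<in>S. P j i)")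
    case True
    then obtain i where i: "i \<in> S" "P j i" by blast
    then have "deg i = deg j - 1" using P_range by blast
    then have "deg i \<noteq> l" using j True by auto
    then have "w i = 0" using assms(2) by (simp add: chains_deg_def)
    then show ?thesis using pre_val[OF assms(1) i(1) _ i(2)] True by simp
  next
    case False then show ?thesis by (intro pre_non) blast
  qed
qed

lemma cycles_e:
  assumes "finite S"
  shows "cycles e S = chains (S - Src S)"
proof
  show "cycles e S \<subseteq> chains (S - Src S)"
  proof
    fix v :: "nat \<Rightarrow> 'a" assume v: "v \<in> cycles e S"
    show "v \<in> chains (S - Src S)" unfolding chains_def
    proof (intro CollectI allI impI)
      fix n assume n: "n \<notin> S - Src S"
      show "v n = 0"
      proof (cases "n \<in> S")
        case True
        then obtain i where i: "i \<in> S" "P n i" using n by (auto simp: Src_def)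
        have "bdry e S v i = v n" by (rule bdry_tgt[OF assms i(1) True i(2)])
        then show ?thesis using v by (simp add: cycles_def)
      next
        case False then show ?thesis using v by (simp add: cycles_def chains_def)
      qed
    qed
  qed
  show "chains (S - Src S) \<subseteq> cycles e S"
  proof
    fix v :: "nat \<Rightarrow> 'a" assume v: "v \<in> chains (S - Src S)"
    have "bdry e S v = 0"
    proof
      fix i
      have "(\<Sum>j\<in>S. e i j * v j) = 0" if iS: "i \<in> S"
      proof (rule sum.neutral, rule ballI)
        fix j assume j: "j \<in> S"
        show "e i j * v j = 0"
        proof (cases "P j i \<and> i \<in> S")
          case True then have "j \<in> Src S" using j by (auto simp: Src_def)
          then show ?thesis using v by (simp add: chains_def)
        next
          case False then show ?thesis using iS e_val[of i j] by simp
        qed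
      qed
      then show "bdry e S v i = 0 i" by (simp add: bdry_def)
    qed
    then show "v \<in> cycles e S" using v by (auto simp: cycles_def chains_def)
  qed
qed

lemma boundaries_e:
  assumes "finite S"
  shows "boundaries e S = chains (Tgt S)"
proof
  show "boundaries e S \<subseteq> chains (Tgt S)"
  proof
    fix w :: "nat \<Rightarrow> 'a" assume "w \<in> boundaries e S"
    then obtain v where w: "w = bdry e S v" by (auto simp: boundaries_def)
    show "w \<in> chains (Tgt S)" unfolding chains_def w
    proof (intro CollectI allI impI)
      fix i assume "i \<notin> Tgt S"
      then have "i \<notin> S \<or> \<not> (\<exists>j\<in>S. P j i)" by (auto simp: Tgt_def)
      then show "bdry e S v i = 0" by (rule bdry_non)
    qed
  qed
  show "chains (Tgt S) \<subseteq> boundaries e S"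
  proof
    fix w :: "nat \<Rightarrow> 'a" assume w: "w \<in> chains (Tgt S)"
    have "w = bdry e S (pre S w)" using bdry_pre[OF assms w] by simp
    then show "w \<in> boundaries e S" unfolding boundaries_def using pre_chains by blast
  qed
qed

lemma cycles_deg_e:
  assumes "finite S"
  shows "cycles_deg deg e S l = chains ((S - Src S) \<inter> {n. deg n = l})"
proof -
  have "cycles_deg deg e S l = chains_deg deg S l \<inter> cycles e S"
    using chains_deg_sub by (auto simp: cycles_deg_def cycles_def)
  also have "\<dots> = chains ((S - Src S) \<inter> {n. deg n = l})"
    unfolding chains_deg_eq cycles_e[OF assms] chains_Int by (rule arg_cong[where f = chains]) blast
  finally show ?thesis .
qed

lemma boundaries_deg_e:
  assumes "finite S"
  shows "boundaries_deg deg e S l = chains (Tgt S \<inter> {n. deg n = l})"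
proof
  show "boundaries_deg deg e S l \<subseteq> chains (Tgt S \<inter> {n. deg n = l})"
  proof
    fix w :: "nat \<Rightarrow> 'a" assume "w \<in> boundaries_deg deg e S l"
    then obtain v where w: "w = bdry e S v" and v: "v \<in> chains_deg deg S (l + 1)"
      by (auto simp: boundaries_deg_def)
    show "w \<in> chains (Tgt S \<inter> {n. deg n = l})" unfolding chains_def w
    proof (intro CollectI allI impI)
      fix i assume i: "i \<notin> Tgt S \<inter> {n. deg n = l}"
      show "bdry e S v i = 0"
      proof (cases "i \<in> S \<and> (\<exists>j\<in>S. P j i)")
        case True
        then obtain j where j: "j \<in> S" "P j i" by blast
        then have "deg i = deg j - 1" using P_range by blast
        moreover have "i \<in> Tgt S" using True by (auto simp: Tgt_def)
        ultimately have "deg j \<noteq> l + 1" using i by auto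
        then have "v j = 0" using v by (simp add: chains_deg_def)
        then show ?thesis using bdry_tgt[OF assms _ j(1,2)] True by simp
      next
        case False then show ?thesis by (intro bdry_non) blast
      qed
    qed
  qed
  show "chains (Tgt S \<inter> {n. deg n = l}) \<subseteq> boundaries_deg deg e S l"
  proof
    fix w :: "nat \<Rightarrow> 'a" assume w: "w \<in> chains (Tgt S \<inter> {n. deg n = l})"
    have w1: "w \<in> chains (Tgt S)" using w by (auto simp: chains_def)
    have w2: "w \<in> chains_deg deg UNIV l" using w by (auto simp: chains_def chains_deg_def)
    have "w = bdry e S (pre S w)" using bdry_pre[OF assms w1] by simp
    then show "w \<in> boundaries_deg deg e S l"
      unfolding boundaries_deg_def using pre_deg[OF assms w2] by blast
  qed
qed

lemma Src_Tgt_disj: "Src S \<inter> Tgt S = {}"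
  using P_chain by (auto simp: Src_def Tgt_def)

lemma card_Src_Tgt:
  assumes "finite S"
  shows "card (Src S) = card (Tgt S)"
proof -
  define f where "f j = (THE i. P j i)" for j
  have fP: "P j (f j)" if "P j i" for j i
    unfolding f_def by (rule theI[of "\<lambda>x. P j x" i]) (use that P_fun in blast)+
  have "bij_betw f (Src S) (Tgt S)"
    unfolding bij_betw_def
  proof
    show "inj_on f (Src S)"
    proof (rule inj_onI)
      fix x y assume "x \<in> Src S" "y \<in> Src S" "f x = f y"
      then obtain i1 i2 where "P x i1" "P y i2" unfolding Src_def by blast
      then show "x = y" using fP P_inj \<open>f x = f y\<close> by metis
    qed
    show "f ` Src S = Tgt S"
    proof
      show "f ` Src S \<subseteq> Tgt S"
      proof
        fix i assume "i \<in> f ` Src S"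
        then obtain j i' where "j \<in> S" "i' \<in> S" "P j i'" "i = f j" unfolding Src_def by blast
        then have "f j = i'" using fP P_fun by blast
        then show "i \<in> Tgt S" using \<open>i = f j\<close> \<open>j \<in> S\<close> \<open>i' \<in> S\<close> \<open>P j i'\<close> unfolding Tgt_def by blast
      qed
      show "Tgt S \<subseteq> f ` Src S"
      proof
        fix i assume "i \<in> Tgt S"
        then obtain j where "j \<in> S" "i \<in> S" "P j i" unfolding Tgt_def by blast
        then have "j \<in> Src S" "f j = i" using fP[of j i] P_fun[of j i "f j"] unfolding Src_def by blast+
        then show "i \<in> f ` Src S" by blast
      qed
    qed
  qed
  then show ?thesis by (rule bij_betw_same_card)
qed

lemma hdim_tot_e:
  assumes "finite S"
  shows "int (hdim_tot e S) = int (card S) - 2 * int (card (Src S))"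
proof -
  have sub: "Src S \<subseteq> S" "Tgt S \<subseteq> S - Src S" using Src_Tgt_disj by (auto simp: Src_def Tgt_def)
  have fin: "finite (S - Src S)" "finite (Tgt S)" using assms sub by (auto intro: finite_subset)
  have "hdim_tot e S = card (S - Src S) - card (Tgt S)"
    unfolding hdim_tot_def cycles_e[OF assms] boundaries_e[OF assms]
    using fin by (simp add: fdim_chains)
  moreover have "card (S - Src S) = card S - card (Src S)"
    using sub assms by (simp add: card_Diff_subset finite_subset)
  moreover have "card (Tgt S) \<le> card (S - Src S)"
    using sub assms by (intro card_mono) auto
  moreover have "card (Src S) \<le> card S" using sub assms by (intro card_mono) auto
  ultimately show ?thesis using card_Src_Tgt[OF assms] by simp
qed


definition ess :: "nat \<Rightarrow> bool" where "ess x \<longleftrightarrow> \<not> (\<exists>y. P x y \<or> P y x)"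

lemma Src_prefix: "Src {1..j} = {x\<in>{1..j}. \<exists>y. P x y}"
proof -
  have "P x y \<Longrightarrow> x \<in> {1..j} \<Longrightarrow> y \<in> {1..j}" for x y using P_range[of x y] by auto
  then show ?thesis unfolding Src_def by blast
qed

lemma Tgt_full: "Tgt {1..N} = {x. \<exists>y. P y x}"
  unfolding Tgt_def using P_range by blast

lemma Src_full: "Src {1..N} = {x. \<exists>y. P x y}"
  unfolding Src_def using P_range by blast

lemma hdim_deg_e: "hdim_deg deg e {1..N} k = card {j\<in>{1..N}. deg j = k \<and> ess j}"
proof -
  let ?A = "({1..N} - Src {1..N}) \<inter> {n. deg n = k}"
  let ?B = "Tgt {1..N} \<inter> {n. deg n = k}"
  have fA: "finite ?A" by auto
  have fB: "finite ?B" using finite_subset[of ?B "{1..N}"] by (auto simp: Tgt_def)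
  have BA: "?B \<subseteq> ?A" using Src_Tgt_disj[of "{1..N}"] by (auto simp: Tgt_def)
  have "hdim_deg deg e {1..N} k = card ?A - card ?B"
    unfolding hdim_deg_def cycles_deg_e[OF finite_atLeastAtMost] boundaries_deg_e[OF finite_atLeastAtMost]
    using fA fB by (simp add: fdim_chains)
  also have "\<dots> = card (?A - ?B)" using BA fA by (simp add: card_Diff_subset finite_subset)
  also have "?A - ?B = {j\<in>{1..N}. deg j = k \<and> ess j}"
    unfolding Src_full Tgt_full ess_def by auto
  finally show ?thesis .
qed

lemma iota_dim_e:
  assumes "j \<le> N"
  shows "iota_dim N deg e j l = card {x\<in>{1..j}. deg x = l \<and> ess x}"
proof -
  let ?A = "({1..j} - Src {1..j}) \<inter> {n. deg n = l}"
  let ?B = "Tgt {1..N} \<inter> {n. deg n = l}"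
  have fA: "finite ?A" by auto
  have fB: "finite ?B" using finite_subset[of ?B "{1..N}"] by (auto simp: Tgt_def)
  have "{z + b |z b. z \<in> cycles_deg deg e {1..j} l \<and> b \<in> boundaries_deg deg e {1..N} l}
      = sumset (chains ?A) (chains ?B)"
    unfolding sumset_def cycles_deg_e[OF finite_atLeastAtMost] boundaries_deg_e[OF finite_atLeastAtMost] ..
  also have "\<dots> = chains (?A \<union> ?B)" by (rule sumset_chains)
  finally have eq: "{z + b |z b. z \<in> cycles_deg deg e {1..j} l \<and> b \<in> boundaries_deg deg e {1..N} l} = chains (?A \<union> ?B)" .
  have "iota_dim N deg e j l = fdim (chains (?A \<union> ?B) :: (nat \<Rightarrow> 'a) set) - fdim (boundaries_deg deg e {1..N} l)"
    unfolding iota_dim_def eq ..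
  also have "\<dots> = card (?A \<union> ?B) - card ?B"
    unfolding boundaries_deg_e[OF finite_atLeastAtMost] using fA fB by (simp add: fdim_chains)
  finally have "iota_dim N deg e j l = card (?A \<union> ?B) - card ?B" .
  also have "card (?A \<union> ?B) = card (?A - ?B) + card ?B"
  proof -
    have "?A \<union> ?B = (?A - ?B) \<union> ?B" by blast
    moreover have "card ((?A - ?B) \<union> ?B) = card (?A - ?B) + card ?B"
      by (rule card_Un_disjoint) (use fA fB in auto)
    ultimately show ?thesis by simp
  qed
  also have "?A - ?B = {x\<in>{1..j}. deg x = l \<and> ess x}"
    unfolding Src_prefix Tgt_full ess_def by auto
  finally show ?thesis by simp
qed

lemma part1_e:
  assumes j: "j \<in> {1..N}"
  shows "ess j \<longleftrightarrow> iota_dim N deg e j (deg j) = iota_dim N deg e (j - 1) (deg j) + 1"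
proof -
  have j1: "j - 1 \<le> N" using j by auto
  have eqset: "{x\<in>{1..j}. deg x = deg j \<and> ess x} =
      {x\<in>{1..j - 1}. deg x = deg j \<and> ess x} \<union> (if ess j then {j} else {})"
  proof (rule set_eqI)
    fix x show "x \<in> {x\<in>{1..j}. deg x = deg j \<and> ess x} \<longleftrightarrow>
      x \<in> {x\<in>{1..j - 1}. deg x = deg j \<and> ess x} \<union> (if ess j then {j} else {})"
      using j by (cases "x = j") auto
  qed
  have fin: "finite {x\<in>{1..j - 1}. deg x = deg j \<and> ess x}" by auto
  have nj: "j \<notin> {x\<in>{1..j - 1}. deg x = deg j \<and> ess x}" by auto
  have "card {x\<in>{1..j}. deg x = deg j \<and> ess x} = card {x\<in>{1..j - 1}. deg x = deg j \<and> ess x} + (if ess j then 1 else 0)"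
    unfolding eqset using fin nj by (cases "ess j") simp_all
  moreover have "iota_dim N deg e j (deg j) = card {x\<in>{1..j}. deg x = deg j \<and> ess x}"
    by (rule iota_dim_e) (use j in simp)
  moreover have "iota_dim N deg e (j - 1) (deg j) = card {x\<in>{1..j - 1}. deg x = deg j \<and> ess x}"
    by (rule iota_dim_e[OF j1])
  ultimately show ?thesis by simp
qed

lemma part2_e: "card {j\<in>{1..N}. deg j = k \<and> ess j} = hdim_deg deg e {1..N} k"
  by (rule hdim_deg_e[symmetric])

lemma cycles_prefix: "cycles e {1..i} = chains {x\<in>{1..i}. \<not> (\<exists>y. P x y)}"
  unfolding cycles_e[OF finite_atLeastAtMost] Src_prefix by (rule arg_cong[where f = chains]) auto

lemma part3_sets:
  assumes i: "i \<in> {1..N}"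
  shows "\<not> ess i \<longleftrightarrow>
    sumset (cycles e {1..i}) (boundaries e {1..N}) = sumset (cycles e {1..i - 1}) (boundaries e {1..N})"
proof -
  have "sumset (cycles e {1..i}) (boundaries e {1..N}) = chains ({x\<in>{1..i}. \<not> (\<exists>y. P x y)} \<union> {x. \<exists>y. P y x})"
    unfolding cycles_prefix boundaries_e[OF finite_atLeastAtMost] Tgt_full by (rule sumset_chains)
  moreover have "sumset (cycles e {1..i - 1}) (boundaries e {1..N}) = chains ({x\<in>{1..i - 1}. \<not> (\<exists>y. P x y)} \<union> {x. \<exists>y. P y x})"
    unfolding cycles_prefix boundaries_e[OF finite_atLeastAtMost] Tgt_full by (rule sumset_chains)
  moreover have "\<not> ess i \<longleftrightarrow> {x\<in>{1..i}. \<not> (\<exists>y. P x y)} \<union> {x. \<exists>y. P y x} = {x\<in>{1..i - 1}. \<not> (\<exists>y. P x y)} \<union> {x. \<exists>y. P y x}"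
  proof
    assume "\<not> ess i"
    then have c: "(\<exists>y. P i y) \<or> (\<exists>y. P y i)" unfolding ess_def by blast
    show "{x\<in>{1..i}. \<not> (\<exists>y. P x y)} \<union> {x. \<exists>y. P y x} = {x\<in>{1..i - 1}. \<not> (\<exists>y. P x y)} \<union> {x. \<exists>y. P y x}"
    proof (rule set_eqI)
      fix x show "x \<in> {x\<in>{1..i}. \<not> (\<exists>y. P x y)} \<union> {x. \<exists>y. P y x} \<longleftrightarrow>
        x \<in> {x\<in>{1..i - 1}. \<not> (\<exists>y. P x y)} \<union> {x. \<exists>y. P y x}"
        using c i by (cases "x = i") auto
    qed
  next
    assume eq: "{x\<in>{1..i}. \<not> (\<exists>y. P x y)} \<union> {x. \<exists>y. P y x} = {x\<in>{1..i - 1}. \<not> (\<exists>y. P x y)} \<union> {x. \<exists>y. P y x}"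
    show "\<not> ess i"
    proof
      assume "ess i"
      then have "i \<in> {x\<in>{1..i}. \<not> (\<exists>y. P x y)} \<union> {x. \<exists>y. P y x}"
        "i \<notin> {x\<in>{1..i - 1}. \<not> (\<exists>y. P x y)} \<union> {x. \<exists>y. P y x}"
        using i unfolding ess_def by auto
      then show False using eq by blast
    qed
  qed
  moreover have "\<And>X Y. (chains X :: (nat \<Rightarrow> 'a) set) = chains Y \<longleftrightarrow> X = Y"
    using chains_inj by blast
  ultimately show ?thesis by simp
qed

lemma Src_insert: "Src (insert a T) = Src T \<union> {j\<in>T. P j a} \<union> {x. x = a \<and> (\<exists>i\<in>insert a T. P a i)}"
  unfolding Src_def by auto

lemma card_le1:
  assumes "finite T"
  shows "card {j\<in>T. P j a} = (if \<exists>j\<in>T. P j a then 1 else 0)"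
proof (cases "\<exists>j\<in>T. P j a")
  case True
  then obtain j where j: "j \<in> T" "P j a" by blast
  then have "{j\<in>T. P j a} = {j}" using P_inj by blast
  then show ?thesis using True by simp
next
  case False then have "{j\<in>T. P j a} = {}" by blast
  then have "card {j\<in>T. P j a} = 0" by (simp only: card.empty)
  moreover have "(if \<exists>j\<in>T. P j a then 1 else 0) = (0::nat)" using False by simp
  ultimately show ?thesis by (simp only:)
qed

lemma part4_e:
  assumes m: "m \<in> {1..N}" and n: "n \<in> {1..N}" and mn: "m > n"
  shows "P m n \<longleftrightarrow>
           hdim_tot e {Suc n..m} = hdim_tot e {n..m - 1} \<and>
           hdim_tot e {n..m - 1} = hdim_tot e {Suc n..m - 1} + 1 \<and>
           hdim_tot e {Suc n..m - 1} + 1 = hdim_tot e {n..m} + 1"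
proof -
  define S1 where "S1 = {Suc n..m - 1}"
  have fS1: "finite S1" by (simp add: S1_def)
  have mS1: "m \<notin> S1" and nS1: "n \<notin> S1" by (auto simp: S1_def)
  have Sm: "{Suc n..m} = insert m S1" using mn by (auto simp: S1_def)
  have Sn: "{n..m - 1} = insert n S1" using mn by (auto simp: S1_def)
  have Smn: "{n..m} = insert n (insert m S1)" using mn by (auto simp: S1_def)
  define x where "x = (\<exists>i\<in>S1. P m i)"
  define y where "y = (\<exists>j\<in>S1. P j n)"
  define z where "z = P m n"
  have xz: "\<not> (x \<and> z)"
  proof
    assume "x \<and> z"
    then obtain i where i: "i \<in> S1" "P m i" "P m n" by (auto simp: x_def z_def)
    then have "i = n" using P_fun by blast
    then show False using nS1 i by simp
  qed
  have yz: "\<not> (y \<and> z)"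
  proof
    assume "y \<and> z"
    then obtain j where j: "j \<in> S1" "P j n" "P m n" by (auto simp: y_def z_def)
    then have "j = m" using P_inj by blast
    then show False using mS1 j by simp
  qed
  have PmS1: "\<not> P j m" if "j \<in> S1" for j using P_range that by (fastforce simp: S1_def)
  have Pmm: "\<not> P m m" using P_range by blast
  have Pn: "\<not> P n i" if "i \<in> insert n S1 \<or> i \<in> insert n (insert m S1)" for i
    using P_range that mn by (fastforce simp: S1_def)
  have disj1: "Src S1 \<inter> {j\<in>S1. P j n} = {}" using P_fun nS1 unfolding Src_def by blast
  have e1: "{j\<in>S1. P j m} = {}" using PmS1 by blast
  have e2: "{x. x = m \<and> (\<exists>i\<in>insert m S1. P m i)} = (if x then {m} else {})"
    using Pmm unfolding x_def by auto
  have SrcSm: "Src (insert m S1) = Src S1 \<union> (if x then {m} else {})"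
    unfolding Src_insert e1 e2 by simp
  have e3: "{x. x = n \<and> (\<exists>i\<in>insert n S1. P n i)} = {}" using Pn by blast
  have SrcSn: "Src (insert n S1) = Src S1 \<union> {j\<in>S1. P j n}"
    unfolding Src_insert e3 by simp
  have e4: "{x. x = n \<and> (\<exists>i\<in>insert n (insert m S1). P n i)} = {}" using Pn by blast
  have e5: "{j\<in>insert m S1. P j n} = {j\<in>S1. P j n} \<union> (if z then {m} else {})"
    unfolding z_def by auto
  have SrcSmn: "Src (insert n (insert m S1)) = Src S1 \<union> {j\<in>S1. P j n} \<union> (if x \<or> z then {m} else {})"
  proof -
    have "Src (insert n (insert m S1)) = Src (insert m S1) \<union> {j\<in>insert m S1. P j n}"
      unfolding Src_insert[of n "insert m S1"] e4 by simp
    also have "\<dots> = Src S1 \<union> (if x then {m} else {}) \<union> ({j\<in>S1. P j n} \<union> (if z then {m} else {}))"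
      unfolding SrcSm e5 ..
    also have "\<dots> = Src S1 \<union> {j\<in>S1. P j n} \<union> (if x \<or> z then {m} else {})"
      by auto
    finally show ?thesis .
  qed
  have mSrc: "m \<notin> Src S1" using mS1 by (auto simp: Src_def)
  have fSrc: "finite (Src S1)" using fS1 by (auto simp: Src_def)
  have cy: "card {j\<in>S1. P j n} = (if y then 1 else 0)" unfolding y_def by (rule card_le1[OF fS1])
  have c1: "card (Src (insert m S1)) = card (Src S1) + (if x then 1 else 0)"
    unfolding SrcSm using mSrc fSrc by auto
  have c2: "card (Src (insert n S1)) = card (Src S1) + (if y then 1 else 0)"
    unfolding SrcSn using disj1 fSrc fS1 cy by (simp add: card_Un_disjoint)
  have c3: "card (Src (insert n (insert m S1))) = card (Src S1) + (if y then 1 else 0) + (if x \<or> z then 1 else 0)"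
  proof -
    have "card (Src S1 \<union> {j\<in>S1. P j n}) = card (Src S1) + (if y then 1 else 0)"
      using disj1 fSrc fS1 cy by (simp add: card_Un_disjoint)
    moreover have "m \<notin> Src S1 \<union> {j\<in>S1. P j n}" using mSrc mS1 by auto
    moreover have "finite (Src S1 \<union> {j\<in>S1. P j n})" using fSrc fS1 by auto
    ultimately show ?thesis unfolding SrcSmn by auto
  qed
  have h1: "int (hdim_tot e {Suc n..m}) = int (card S1) + 1 - 2 * int (card (Src S1) + (if x then 1 else 0))"
    unfolding Sm using hdim_tot_e[of "insert m S1"] c1 fS1 mS1 by simp
  have h2: "int (hdim_tot e {n..m - 1}) = int (card S1) + 1 - 2 * int (card (Src S1) + (if y then 1 else 0))"
    unfolding Sn using hdim_tot_e[of "insert n S1"] c2 fS1 nS1 by simp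
  have h3: "int (hdim_tot e {Suc n..m - 1}) = int (card S1) - 2 * int (card (Src S1))"
    unfolding S1_def[symmetric] using hdim_tot_e[OF fS1] by simp
  have h4: "int (hdim_tot e {n..m}) = int (card S1) + 2 - 2 * int (card (Src S1) + (if y then 1 else 0) + (if x \<or> z then 1 else 0))"
    unfolding Smn using hdim_tot_e[of "insert n (insert m S1)"] c3 fS1 nS1 mS1 mn by simp
  show ?thesis
  proof (cases z)
    case True
    then have "\<not> x" "\<not> y" using xz yz by auto
    then show ?thesis using h1 h2 h3 h4 True by (simp add: z_def)
  next
    case False
    show ?thesis
    proof (cases x; cases y)
      assume "x" "y" then show ?thesis using h1 h2 h3 h4 False by (simp add: z_def)
    next
      assume "x" "\<not> y" then show ?thesis using h1 h2 h3 h4 False by (simp add: z_def)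
    next
      assume "\<not> x" "y" then show ?thesis using h1 h2 h3 h4 False by (simp add: z_def)
    next
      assume "\<not> x" "\<not> y" then show ?thesis using h1 h2 h3 h4 False by (simp add: z_def)
    qed
  qed
qed

end

lemma bdry_ev:
  assumes "m \<in> {1..N}" "j \<in> {1..N}"
  shows "bdry h {1..N} (ev j) m = h m j"
  using assms by (simp add: bdry_def ev_def sum_delta_mult)

lemma inv_upper:
  assumes ug: "upper N g" and gg: "gradedm N deg g" and gh: "isinv N g h" and hg: "isinv N h g"
  shows "upper N h \<and> gradedm N deg h"
proof -
  define col where "col j = (\<lambda>n. if n \<in> {1..N} then g n j else 0)" for j
  have Hcol: "bdry h {1..N} (col j) i = (if i = j then 1 else 0)" if "i \<in> {1..N}" "j \<in> {1..N}" for i j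
  proof -
    have "bdry h {1..N} (col j) i = matmul N h g i j"
      using that unfolding bdry_def matmul_def col_def by (auto intro!: sum.cong)
    then show ?thesis using hg that unfolding isinv_def by simp
  qed
  have col_ch: "col j \<in> chains {1..j}" if j: "j \<in> {1..N}" for j
    unfolding chains_def
  proof (intro CollectI allI impI)
    fix n assume n: "n \<notin> {1..j}"
    show "col j n = 0"
    proof (cases "n \<in> {1..N}")
      case True then have "\<not> n \<le> j" using n by auto
      then have "g n j = 0" using ug True j unfolding upper_def by blast
      then show ?thesis by (simp add: col_def)
    qed (auto simp: col_def)
  qed
  have col_gr: "col j \<in> chains_deg deg UNIV (deg j)" if j: "j \<in> {1..N}" for j
    unfolding chains_deg_def
  proof (intro CollectI allI impI)
    fix n assume n: "n \<notin> UNIV \<or> deg n \<noteq> deg j"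
    show "col j n = 0"
    proof (cases "n \<in> {1..N}")
      case True
      then have "g n j = 0" using gg j n unfolding gradedm_def by blast
      then show ?thesis by (simp add: col_def)
    qed (auto simp: col_def)
  qed
  have diag: "g j j \<noteq> 0" if "j \<in> {1..N}" for j
  proof (rule ccontr)
    assume "\<not> g j j \<noteq> 0"
    define S0 where "S0 = {j\<in>{1..N}. g j j = 0}"
    have S0ne: "S0 \<noteq> {}" "finite S0" using that \<open>\<not> g j j \<noteq> 0\<close> by (auto simp: S0_def)
    define i where "i = Min S0"
    have iS0: "i \<in> S0" unfolding i_def using S0ne by (rule Min_in[rotated])
    then have iR: "i \<in> {1..N}" and gii: "g i i = 0" by (auto simp: S0_def)
    have imin: "g j' j' \<noteq> 0" if "j' \<in> {1..N}" "j' < i" for j'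
    proof
      assume "g j' j' = 0"
      then have "j' \<in> S0" using that by (simp add: S0_def)
      then have "i \<le> j'" unfolding i_def using Min_le[OF S0ne(2)] by blast
      then show False using that by simp
    qed
    have tri: "tri_family (i - 1) col"
      unfolding tri_family_def
    proof
      fix j' assume j': "j' \<in> {1..i - 1}"
      then have "j' \<in> {1..N}" "j' < i" using iR by auto
      then show "col j' \<in> chains {1..j'} \<and> col j' j' \<noteq> 0"
        using col_ch imin by (auto simp: col_def)
    qed
    have "col i \<in> chains {1..i - 1}"
      unfolding chains_def
    proof (intro CollectI allI impI)
      fix n assume n: "n \<notin> {1..i - 1}"
      show "col i n = 0"
      proof (cases "n = i")
        case True then show ?thesis using gii by (simp add: col_def)
      next
        case False then have "n \<notin> {1..i}" using n by auto
        then show ?thesis using col_ch[OF iR] by (simp add: chains_def)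
      qed
    qed
    then obtain c where c: "\<And>n. col i n = (\<Sum>j'\<in>{1..i - 1}. c j' * col j' n)"
      using tri_span[OF tri] by blast
    have ceq: "col i = (\<lambda>n. \<Sum>j'\<in>{1..i - 1}. c j' * col j' n)" using c by auto
    have "bdry h {1..N} (col i) = (\<lambda>n. \<Sum>j'\<in>{1..i - 1}. c j' * bdry h {1..N} (col j') n)"
      by (subst ceq) (rule bdry_lincomb, simp)
    then have "bdry h {1..N} (col i) i = (\<Sum>j'\<in>{1..i - 1}. c j' * bdry h {1..N} (col j') i)"
      by simp
    also have "\<dots> = 0"
    proof (rule sum.neutral, rule ballI)
      fix j' assume "j' \<in> {1..i - 1}"
      then have "j' \<in> {1..N}" "j' \<noteq> i" using iR by auto
      then show "c j' * bdry h {1..N} (col j') i = 0" using Hcol[OF iR] by simp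
    qed
    finally show False using Hcol[OF iR iR] by simp
  qed
  have coeff: "h m j = 0 \<or> (m \<le> j \<and> deg m = deg j)" if m: "m \<in> {1..N}" and j: "j \<in> {1..N}" for m j
  proof -
    have tri: "tri_family j col"
      unfolding tri_family_def using col_ch diag j by (auto simp: col_def)
    have gr: "\<forall>j'\<in>{1..j}. col j' \<in> chains_deg deg UNIV (deg j')" using col_gr j by auto
    obtain c where cd: "\<And>i. c i \<noteq> 0 \<Longrightarrow> deg i = deg j"
      and ce: "\<And>n. ev j n = (\<Sum>i\<in>{1..j}. c i * col i n)"
      using tri_span_graded[OF tri gr, of "ev j" "deg j"]
        ev_chains_deg[of j deg] chains_deg_sub[of deg "{1..j}" "deg j"]
        chains_deg_UNIV[of deg "{1..j}" "deg j"] j by auto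
    have ceq: "ev j = (\<lambda>n. \<Sum>i\<in>{1..j}. c i * col i n)" using ce by auto
    have "bdry h {1..N} (ev j) = (\<lambda>n. \<Sum>i\<in>{1..j}. c i * bdry h {1..N} (col i) n)"
      by (subst ceq) (rule bdry_lincomb, simp)
    then have "bdry h {1..N} (ev j) m = (\<Sum>i\<in>{1..j}. c i * bdry h {1..N} (col i) m)"
      by simp
    also have "\<dots> = (\<Sum>i\<in>{1..j}. c i * (if m = i then 1 else 0))"
      by (rule sum.cong) (use Hcol m j in auto)
    also have "\<dots> = (if m \<in> {1..j} then c m else 0)" by (simp add: sum_delta_mult)
    finally have "h m j = (if m \<in> {1..j} then c m else 0)" using bdry_ev[OF m j, where h=h] by simp
    then show ?thesis using cd by auto
  qed
  have c2: "m \<le> j \<and> deg m = deg j" if "m \<in> {1..N}" "j \<in> {1..N}" "h m j \<noteq> 0" for m j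
    using coeff[OF that(1,2)] that(3) by blast
  show ?thesis unfolding upper_def gradedm_def using c2 by blast
qed

lemma bdry_graded:
  assumes "gradedm N deg X" "S \<subseteq> {1..N}" "v \<in> chains_deg deg S l"
  shows "bdry X S v \<in> chains_deg deg S l"
  unfolding chains_deg_def
proof (intro CollectI allI impI)
  fix i assume i: "i \<notin> S \<or> deg i \<noteq> l"
  show "bdry X S v i = 0"
  proof (cases "i \<in> S")
    case True
    have "(\<Sum>j\<in>S. X i j * v j) = 0"
    proof (rule sum.neutral, rule ballI)
      fix j assume j: "j \<in> S"
      show "X i j * v j = 0"
      proof (cases "X i j = 0")
        case False
        then have "deg i = deg j" using assms(1,2) True j unfolding gradedm_def by blast
        then have "v j = 0" using assms(3) i True by (simp add: chains_deg_def)
        then show ?thesis by simp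
      qed simp
    qed
    then show ?thesis using True by (simp add: bdry_def)
  qed (simp add: bdry_def)
qed

lemma sumset_image:
  "sumset (bdry X S ` A) (bdry X S ` B) = bdry X S ` sumset A B"
proof
  show "sumset (bdry X S ` A) (bdry X S ` B) \<subseteq> bdry X S ` sumset A B"
  proof
    fix x assume "x \<in> sumset (bdry X S ` A) (bdry X S ` B)"
    then obtain a b where ab: "a \<in> A" "b \<in> B" "x = bdry X S a + bdry X S b"
      unfolding sumset_def by blast
    then have "x = bdry X S (a + b)" by (simp add: bdry_add)
    moreover have "a + b \<in> sumset A B" using ab unfolding sumset_def by blast
    ultimately show "x \<in> bdry X S ` sumset A B" by blast
  qed
  show "bdry X S ` sumset A B \<subseteq> sumset (bdry X S ` A) (bdry X S ` B)"
  proof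
    fix x assume "x \<in> bdry X S ` sumset A B"
    then obtain a b where ab: "a \<in> A" "b \<in> B" "x = bdry X S (a + b)"
      unfolding sumset_def by blast
    then have "x = bdry X S a + bdry X S b" by (simp add: bdry_add)
    then show "x \<in> sumset (bdry X S ` A) (bdry X S ` B)" using ab unfolding sumset_def by blast
  qed
qed

lemma coset_iff:
  fixes B :: "(nat \<Rightarrow> 'a::field) set"
  assumes B0: "0 \<in> B" and Badd: "\<And>x y. x \<in> B \<Longrightarrow> y \<in> B \<Longrightarrow> x + y \<in> B"
    and Bneg: "\<And>x. x \<in> B \<Longrightarrow> - x \<in> B"
  shows "((\<lambda>z. {z + b | b. b \<in> B}) ` Z1 = (\<lambda>z. {z + b | b. b \<in> B}) ` Z2) \<longleftrightarrow> sumset Z1 B = sumset Z2 B"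
proof -
  have key: "sumset Z1 B \<subseteq> sumset Z2 B"
    if h: "(\<lambda>z. {z + b | b. b \<in> B}) ` Z1 \<subseteq> (\<lambda>z. {z + b | b. b \<in> B}) ` Z2" for Z1 Z2
  proof
    fix x assume "x \<in> sumset Z1 B"
    then obtain z b where zb: "x = z + b" "z \<in> Z1" "b \<in> B" by (auto simp: sumset_def)
    then obtain z2 where z2: "z2 \<in> Z2" "{z + b | b. b \<in> B} = {z2 + b | b. b \<in> B}" using h by blast
    have "x \<in> {z + b | b. b \<in> B}" using zb by blast
    then show "x \<in> sumset Z2 B" using z2 by (auto simp: sumset_def)
  qed
  have key2: "(\<lambda>z. {z + b | b. b \<in> B}) ` Z1 \<subseteq> (\<lambda>z. {z + b | b. b \<in> B}) ` Z2"
    if h: "sumset Z1 B \<subseteq> sumset Z2 B" for Z1 Z2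
  proof
    fix C assume "C \<in> (\<lambda>z. {z + b | b. b \<in> B}) ` Z1"
    then obtain z where z: "z \<in> Z1" "C = {z + b | b. b \<in> B}" by blast
    have "z + 0 \<in> sumset Z1 B" using z B0 unfolding sumset_def by blast
    then have "z \<in> sumset Z2 B" using h by auto
    then obtain z2 b0 where zb: "z = z2 + b0" "z2 \<in> Z2" "b0 \<in> B" unfolding sumset_def by blast
    have "{z + b | b. b \<in> B} = {z2 + b | b. b \<in> B}"
    proof
      show "{z + b | b. b \<in> B} \<subseteq> {z2 + b | b. b \<in> B}"
      proof
        fix x assume "x \<in> {z + b | b. b \<in> B}"
        then obtain b where "x = z + b" "b \<in> B" by blast
        then have "x = z2 + (b0 + b)" "b0 + b \<in> B" using zb Badd by (auto simp: add.assoc)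
        then show "x \<in> {z2 + b | b. b \<in> B}" by blast
      qed
      show "{z2 + b | b. b \<in> B} \<subseteq> {z + b | b. b \<in> B}"
      proof
        fix x assume "x \<in> {z2 + b | b. b \<in> B}"
        then obtain b where "x = z2 + b" "b \<in> B" by blast
        then have "x = z + (b + - b0)" using zb by (simp add: algebra_simps)
        moreover have "b + - b0 \<in> B" using Badd Bneg \<open>b \<in> B\<close> zb(3) by blast
        ultimately show "x \<in> {z + b | b. b \<in> B}" by blast
      qed
    qed
    then show "C \<in> (\<lambda>z. {z + b | b. b \<in> B}) ` Z2" using z zb by blast
  qed
  show ?thesis
  proof
    assume "(\<lambda>z. {z + b | b. b \<in> B}) ` Z1 = (\<lambda>z. {z + b | b. b \<in> B}) ` Z2"
    then show "sumset Z1 B = sumset Z2 B" using key[of Z1 Z2] key[of Z2 Z1] by blast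
  next
    assume "sumset Z1 B = sumset Z2 B"
    then show "(\<lambda>z. {z + b | b. b \<in> B}) ` Z1 = (\<lambda>z. {z + b | b. b \<in> B}) ` Z2"
      using key2[of Z1 Z2] key2[of Z2 Z1] by blast
  qed
qed

lemma chains_add: "u \<in> chains S \<Longrightarrow> v \<in> chains S \<Longrightarrow> u + v \<in> (chains S :: (nat \<Rightarrow> 'a::field) set)"
  by (auto simp: chains_def)

lemma chains_neg: "u \<in> chains S \<Longrightarrow> - u \<in> (chains S :: (nat \<Rightarrow> 'a::field) set)"
  by (auto simp: chains_def)

lemma iota_img_iff:
  "iota_img N d i = iota_img N d i' \<longleftrightarrow>
   sumset (cycles d {1..i}) (boundaries d {1..N}) = sumset (cycles d {1..i'}) (boundaries d {1..N})"
  unfolding iota_img_def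
proof (rule coset_iff)
  show "0 \<in> boundaries d {1..N}"
  proof -
    have "(0 :: nat \<Rightarrow> 'a) \<in> chains {1..N}" by (simp add: chains_def)
    then have "bdry d {1..N} 0 \<in> boundaries d {1..N}" unfolding boundaries_def by blast
    then show ?thesis by simp
  qed
  show "x + y \<in> boundaries d {1..N}" if "x \<in> boundaries d {1..N}" "y \<in> boundaries d {1..N}" for x y
    using that unfolding boundaries_def by (auto simp: bdry_add[symmetric] intro!: imageI chains_add)
  show "- x \<in> boundaries d {1..N}" if "x \<in> boundaries d {1..N}" for x
    using that unfolding boundaries_def by (auto simp: bdry_uminus[symmetric] intro!: imageI chains_neg)
qed

locale eqv =
  fixes N :: nat and deg :: "nat \<Rightarrow> int" and d1 d2 g h :: "nat \<Rightarrow> nat \<Rightarrow> 'a::field"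
  assumes Md1: "M_differential N deg d1" and Md2: "M_differential N deg d2"
    and ug: "upper N g" and gg: "gradedm N deg g" and uh: "upper N h" and ghm: "gradedm N deg h"
    and gh: "isinv N g h" and hg: "isinv N h g"
    and cj: "\<And>i j. i \<in> {1..N} \<Longrightarrow> j \<in> {1..N} \<Longrightarrow> d2 i j = matmul N (matmul N g d1) h i j"
begin

lemma intertw:
  assumes "i \<in> {1..N}" "k \<in> {1..N}"
  shows "matmul N d2 g i k = matmul N g d1 i k"
proof -
  have "matmul N d2 g i k = matmul N (matmul N (matmul N g d1) h) g i k"
    by (rule matmul_cong) (use assms cj in auto)
  also have "\<dots> = matmul N (matmul N g d1) (matmul N h g) i k" by (simp add: matmul_assoc)
  also have "\<dots> = matmul N g d1 i k" by (rule matmul_id_right[OF hg assms])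
  finally show ?thesis .
qed

lemma ud1: "upper N d1" using M_diff_upper[OF Md1] .
lemma ud2: "upper N d2" using M_diff_upper[OF Md2] .

lemma sub_cyc_deg: "cycles_deg deg d S l \<subseteq> chains S"
  using chains_deg_sub by (auto simp: cycles_deg_def)
lemma sub_bnd_deg: "boundaries_deg deg d S l \<subseteq> chains S"
  using bdry_in_chains by (auto simp: boundaries_deg_def)
lemma sub_cyc: "cycles d S \<subseteq> chains S"
  by (auto simp: cycles_def)
lemma sub_bnd: "boundaries d S \<subseteq> chains S"
  using bdry_in_chains by (auto simp: boundaries_def)

context
  fixes a b :: nat
  assumes a1: "1 \<le> a" and bN: "b \<le> N"
begin

abbreviation "G \<equiv> bdry g {a..b}"
abbreviation "H \<equiv> bdry h {a..b}"

lemma SR: "{a..b} \<subseteq> {1..N}" using a1 bN by auto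

lemma GH: "v \<in> chains {a..b} \<Longrightarrow> G (H v) = v"
  unfolding bdry_bdry_matmul[OF ug uh a1 bN]
  by (rule bdry_id) (use gh SR in \<open>auto simp: isinv_def\<close>)

lemma HG: "v \<in> chains {a..b} \<Longrightarrow> H (G v) = v"
  unfolding bdry_bdry_matmul[OF uh ug a1 bN]
  by (rule bdry_id) (use hg SR in \<open>auto simp: isinv_def\<close>)

lemma comm: "bdry d2 {a..b} (G v) = G (bdry d1 {a..b} v)"
  unfolding bdry_bdry_matmul[OF ud2 ug a1 bN] bdry_bdry_matmul[OF ug ud1 a1 bN]
  by (rule bdry_cong) (use intertw SR in auto)

lemma G_deg: "v \<in> chains_deg deg {a..b} l \<Longrightarrow> G v \<in> chains_deg deg {a..b} l"
  by (rule bdry_graded[OF gg SR])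

lemma H_deg: "v \<in> chains_deg deg {a..b} l \<Longrightarrow> H v \<in> chains_deg deg {a..b} l"
  by (rule bdry_graded[OF ghm SR])

lemma G_inj: "inj_on G (chains {a..b})"
  by (rule inj_on_inverseI[where g = H]) (rule HG)

lemma fdim_G: "V \<subseteq> chains {a..b} \<Longrightarrow> fdim (G ` V) = fdim V"
  by (rule fdim_image_inj[OF linear_bdry _ subspace_chains G_inj])

lemma cyc_deg: "cycles_deg deg d2 {a..b} l = G ` cycles_deg deg d1 {a..b} l"
proof
  show "G ` cycles_deg deg d1 {a..b} l \<subseteq> cycles_deg deg d2 {a..b} l"
    using G_deg comm by (auto simp: cycles_deg_def)
  show "cycles_deg deg d2 {a..b} l \<subseteq> G ` cycles_deg deg d1 {a..b} l"
  proof
    fix w assume w: "w \<in> cycles_deg deg d2 {a..b} l"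
    then have wc: "w \<in> chains_deg deg {a..b} l" "bdry d2 {a..b} w = 0" by (auto simp: cycles_deg_def)
    then have wch: "w \<in> chains {a..b}" using chains_deg_sub by blast
    define v where "v = H w"
    have v: "v \<in> chains_deg deg {a..b} l" using H_deg[OF wc(1)] by (simp add: v_def)
    have Gv: "G v = w" using GH[OF wch] by (simp add: v_def)
    have "G (bdry d1 {a..b} v) = 0" using comm[of v] Gv wc(2) by simp
    then have "H (G (bdry d1 {a..b} v)) = 0" by simp
    then have "bdry d1 {a..b} v = 0" using HG[OF bdry_in_chains] by simp
    then have "v \<in> cycles_deg deg d1 {a..b} l" using v by (simp add: cycles_deg_def)
    then show "w \<in> G ` cycles_deg deg d1 {a..b} l" using Gv by blast
  qed
qed

lemma cyc: "cycles d2 {a..b} = G ` cycles d1 {a..b}"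
proof
  show "G ` cycles d1 {a..b} \<subseteq> cycles d2 {a..b}"
    using comm bdry_in_chains by (auto simp: cycles_def)
  show "cycles d2 {a..b} \<subseteq> G ` cycles d1 {a..b}"
  proof
    fix w assume w: "w \<in> cycles d2 {a..b}"
    then have wc: "w \<in> chains {a..b}" "bdry d2 {a..b} w = 0" by (auto simp: cycles_def)
    define v where "v = H w"
    have v: "v \<in> chains {a..b}" using bdry_in_chains by (simp add: v_def)
    have Gv: "G v = w" using GH[OF wc(1)] by (simp add: v_def)
    have "G (bdry d1 {a..b} v) = 0" using comm[of v] Gv wc(2) by simp
    then have "H (G (bdry d1 {a..b} v)) = 0" by simp
    then have "bdry d1 {a..b} v = 0" using HG[OF bdry_in_chains] by simp
    then have "v \<in> cycles d1 {a..b}" using v by (simp add: cycles_def)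
    then show "w \<in> G ` cycles d1 {a..b}" using Gv by blast
  qed
qed

lemma bnd_deg: "boundaries_deg deg d2 {a..b} l = G ` boundaries_deg deg d1 {a..b} l"
proof
  show "G ` boundaries_deg deg d1 {a..b} l \<subseteq> boundaries_deg deg d2 {a..b} l"
  proof
    fix x assume "x \<in> G ` boundaries_deg deg d1 {a..b} l"
    then obtain u where u: "u \<in> chains_deg deg {a..b} (l + 1)" "x = G (bdry d1 {a..b} u)"
      by (auto simp: boundaries_deg_def)
    then have "x = bdry d2 {a..b} (G u)" using comm by simp
    then show "x \<in> boundaries_deg deg d2 {a..b} l" using G_deg[OF u(1)] by (auto simp: boundaries_deg_def)
  qed
  show "boundaries_deg deg d2 {a..b} l \<subseteq> G ` boundaries_deg deg d1 {a..b} l"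
  proof
    fix x assume "x \<in> boundaries_deg deg d2 {a..b} l"
    then obtain w where w: "w \<in> chains_deg deg {a..b} (l + 1)" "x = bdry d2 {a..b} w"
      by (auto simp: boundaries_deg_def)
    have wch: "w \<in> chains {a..b}" using w chains_deg_sub by blast
    have "x = bdry d2 {a..b} (G (H w))" using GH[OF wch] w by simp
    also have "\<dots> = G (bdry d1 {a..b} (H w))" by (rule comm)
    finally have "x = G (bdry d1 {a..b} (H w))" .
    moreover have "bdry d1 {a..b} (H w) \<in> boundaries_deg deg d1 {a..b} l"
      using H_deg[OF w(1)] by (auto simp: boundaries_deg_def)
    ultimately show "x \<in> G ` boundaries_deg deg d1 {a..b} l" by blast
  qed
qed

lemma bnd: "boundaries d2 {a..b} = G ` boundaries d1 {a..b}"
proof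
  show "G ` boundaries d1 {a..b} \<subseteq> boundaries d2 {a..b}"
  proof
    fix x assume "x \<in> G ` boundaries d1 {a..b}"
    then obtain u where u: "u \<in> chains {a..b}" "x = G (bdry d1 {a..b} u)"
      by (auto simp: boundaries_def)
    then have "x = bdry d2 {a..b} (G u)" using comm by simp
    then show "x \<in> boundaries d2 {a..b}" using bdry_in_chains by (auto simp: boundaries_def)
  qed
  show "boundaries d2 {a..b} \<subseteq> G ` boundaries d1 {a..b}"
  proof
    fix x assume "x \<in> boundaries d2 {a..b}"
    then obtain w where w: "w \<in> chains {a..b}" "x = bdry d2 {a..b} w"
      by (auto simp: boundaries_def)
    have "x = bdry d2 {a..b} (G (H w))" using GH[OF w(1)] w by simp
    also have "\<dots> = G (bdry d1 {a..b} (H w))" by (rule comm)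
    finally have "x = G (bdry d1 {a..b} (H w))" .
    moreover have "bdry d1 {a..b} (H w) \<in> boundaries d1 {a..b}"
      using bdry_in_chains by (auto simp: boundaries_def)
    ultimately show "x \<in> G ` boundaries d1 {a..b}" by blast
  qed
qed

lemma hdim_tot_eq: "hdim_tot d2 {a..b} = hdim_tot d1 {a..b}"
  unfolding hdim_tot_def cyc bnd using fdim_G[OF sub_cyc] fdim_G[OF sub_bnd] by simp

lemma hdim_deg_eq: "hdim_deg deg d2 {a..b} l = hdim_deg deg d1 {a..b} l"
  unfolding hdim_deg_def cyc_deg bnd_deg using fdim_G[OF sub_cyc_deg] fdim_G[OF sub_bnd_deg] by simp

end

abbreviation "GN \<equiv> bdry g {1..N}"

lemma prefix_img:
  assumes "j \<le> N" "V \<subseteq> chains {1..j}"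
  shows "bdry g {1..j} ` V = GN ` V"
  using bdry_prefix[OF ug assms(1)] assms(2) by (auto intro!: image_cong)

lemma chains_prefix_sub: "j \<le> N \<Longrightarrow> chains {1..j} \<subseteq> chains {1..N}"
  by (auto simp: chains_def)

lemma iota_dim_eq:
  assumes j: "j \<le> N"
  shows "iota_dim N deg d2 j l = iota_dim N deg d1 j l"
proof -
  have "cycles_deg deg d2 {1..j} l = bdry g {1..j} ` cycles_deg deg d1 {1..j} l"
    by (rule cyc_deg[where a=1 and b=j]) (use j in auto)
  also have "\<dots> = GN ` cycles_deg deg d1 {1..j} l"
    by (rule prefix_img[OF j sub_cyc_deg])
  finally have c: "cycles_deg deg d2 {1..j} l = GN ` cycles_deg deg d1 {1..j} l" .
  have b: "boundaries_deg deg d2 {1..N} l = GN ` boundaries_deg deg d1 {1..N} l"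
    by (rule bnd_deg) auto
  have ss: "sumset (cycles_deg deg d1 {1..j} l) (boundaries_deg deg d1 {1..N} l) \<subseteq> chains {1..N}"
    using sub_cyc_deg[of d1 "{1..j}" l] sub_bnd_deg[of d1 "{1..N}" l] chains_prefix_sub[OF j]
    by (auto simp: sumset_def intro!: chains_add)
  have "{z + b |z b. z \<in> cycles_deg deg d2 {1..j} l \<and> b \<in> boundaries_deg deg d2 {1..N} l}
     = GN ` sumset (cycles_deg deg d1 {1..j} l) (boundaries_deg deg d1 {1..N} l)"
    unfolding c b sumset_def[symmetric] sumset_image ..
  then have "fdim {z + b |z b. z \<in> cycles_deg deg d2 {1..j} l \<and> b \<in> boundaries_deg deg d2 {1..N} l}
     = fdim {z + b |z b. z \<in> cycles_deg deg d1 {1..j} l \<and> b \<in> boundaries_deg deg d1 {1..N} l}"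
    using fdim_G[of 1 N, OF _ _ ss] by (simp add: sumset_def)
  moreover have "fdim (boundaries_deg deg d2 {1..N} l) = fdim (boundaries_deg deg d1 {1..N} l)"
    unfolding b by (rule fdim_G) (use sub_bnd_deg[of d1 "{1..N}" l] in auto)
  ultimately show ?thesis unfolding iota_dim_def by simp
qed

lemma iota_img_eq:
  assumes i: "i \<le> N" and i': "i' \<le> N"
  shows "(iota_img N d2 i = iota_img N d2 i') \<longleftrightarrow> (iota_img N d1 i = iota_img N d1 i')"
proof -
  have c: "cycles d2 {1..k} = GN ` cycles d1 {1..k}" if k: "k \<le> N" for k
  proof -
    have "cycles d2 {1..k} = bdry g {1..k} ` cycles d1 {1..k}"
      by (rule cyc[where a=1 and b=k]) (use k in auto)
    also have "\<dots> = GN ` cycles d1 {1..k}"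
      by (rule prefix_img[OF k sub_cyc])
    finally show ?thesis .
  qed
  have b: "boundaries d2 {1..N} = GN ` boundaries d1 {1..N}"
    by (rule bnd) auto
  have ss: "sumset (cycles d1 {1..k}) (boundaries d1 {1..N}) \<subseteq> chains {1..N}" if k: "k \<le> N" for k
    using sub_cyc[of d1 "{1..k}"] sub_bnd[of d1 "{1..N}"] chains_prefix_sub[OF k]
    by (auto simp: sumset_def intro!: chains_add)
  have e: "sumset (cycles d2 {1..k}) (boundaries d2 {1..N}) = GN ` sumset (cycles d1 {1..k}) (boundaries d1 {1..N})"
    if k: "k \<le> N" for k
    unfolding c[OF k] b sumset_image ..
  have inj: "inj_on GN (chains {1..N})" by (rule G_inj) auto
  show ?thesis
    unfolding iota_img_iff e[OF i] e[OF i']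
    using inj_on_image_eq_iff[OF inj ss[OF i] ss[OF i']] by simp
qed

end

lemma M_equiv_eqv:
  assumes "M_equiv N deg d1 d2"
  shows "\<exists>g h. eqv N deg d1 d2 g h"
proof -
  obtain g h where A: "autT N deg g"
    and gh: "\<forall>i\<in>{1..N}. \<forall>k\<in>{1..N}. matmul N g h i k = (if i = k then 1 else 0) \<and> matmul N h g i k = (if i = k then 1 else 0)"
    and cj: "\<forall>i\<in>{1..N}. \<forall>j\<in>{1..N}. d2 i j = matmul N (matmul N g d1) h i j"
    and M: "M_differential N deg d1" "M_differential N deg d2"
    using assms unfolding M_equiv_def by blast
  have ug: "upper N g" and gg: "gradedm N deg g"
    using A unfolding autT_def upper_def gradedm_def by blast+
  have i1: "isinv N g h" and i2: "isinv N h g" using gh unfolding isinv_def by blast+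
  have "upper N h \<and> gradedm N deg h" by (rule inv_upper[OF ug gg i1 i2])
  then have "eqv N deg d1 d2 g h"
    using M ug gg i1 i2 cj by (unfold_locales) auto
  then show ?thesis by blast
qed

theorem lemma3p2:
  fixes N :: nat and deg :: "nat \<Rightarrow> int" and d :: "nat \<Rightarrow> nat \<Rightarrow> 'a::field"
  assumes "M_differential N deg d"
  shows
   "(\<forall>j\<in>{1..N}. essential N deg d j \<longleftrightarrow>
        iota_dim N deg d j (deg j) = iota_dim N deg d (j - 1) (deg j) + 1)
    \<and> (\<forall>k. card {j\<in>{1..N}. deg j = k \<and> essential N deg d j} = hdim_deg deg d {1..N} k)
    \<and> (\<forall>i\<in>{1..N}. \<not> essential N deg d i \<longleftrightarrow> iota_img N d i = iota_img N d (i - 1))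
    \<and> (\<forall>m\<in>{1..N}. \<forall>n\<in>{1..N}. m > n \<longrightarrow>
        (forms_pair N deg d m n \<longleftrightarrow>
           rel_hdim d m n = rel_hdim d (m - 1) (n - 1) \<and>
           rel_hdim d (m - 1) (n - 1) = rel_hdim d (m - 1) n + 1 \<and>
           rel_hdim d (m - 1) n + 1 = rel_hdim d m (n - 1) + 1))"
proof -
  interpret md: mdiff N deg d by unfold_locales (rule assms)
  obtain e where El: "elementary N deg e" and Eq: "M_equiv N deg d e"
    using md.exists_elementary by blast
  interpret el: elem N deg e by unfold_locales (rule El)
  obtain g h where eq: "eqv N deg d e g h" using M_equiv_eqv[OF Eq] by blast
  interpret q: eqv N deg d e g h by (rule eq)
  have part4': "el.P m n \<longleftrightarrow>
           hdim_tot d {Suc n..m} = hdim_tot d {n..m - 1} \<and>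
           hdim_tot d {n..m - 1} = hdim_tot d {Suc n..m - 1} + 1 \<and>
           hdim_tot d {Suc n..m - 1} + 1 = hdim_tot d {n..m} + 1"
    if m: "m \<in> {1..N}" and n: "n \<in> {1..N}" and mn: "m > n" for m n
  proof -
    have h: "hdim_tot e {a..b} = hdim_tot d {a..b}" if "1 \<le> a" "b \<le> N" for a b
      by (rule q.hdim_tot_eq[OF that])
    have h1: "hdim_tot e {Suc n..m} = hdim_tot d {Suc n..m}" by (rule h) (use m in auto)
    have h2: "hdim_tot e {n..m - 1} = hdim_tot d {n..m - 1}" by (rule h) (use m n in auto)
    have h3: "hdim_tot e {Suc n..m - 1} = hdim_tot d {Suc n..m - 1}" by (rule h) (use m in auto)
    have h4: "hdim_tot e {n..m} = hdim_tot d {n..m}" by (rule h) (use m n in auto)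
    show ?thesis using el.part4_e[OF m n mn] unfolding h1 h2 h3 h4 .
  qed
  have uniq: "e' = e" if El': "elementary N deg e'" and Eq': "M_equiv N deg d e'" for e'
  proof -
    interpret el': elem N deg e' by unfold_locales (rule El')
    obtain g' h' where eq': "eqv N deg d e' g' h'" using M_equiv_eqv[OF Eq'] by blast
    interpret q': eqv N deg d e' g' h' by (rule eq')
    have PP: "el'.P x z \<longleftrightarrow> el.P x z" for x z
    proof (cases "x \<in> {1..N} \<and> z \<in> {1..N} \<and> z < x")
      case True
      then have m: "x \<in> {1..N}" and n: "z \<in> {1..N}" and mn: "x > z" by auto
      have h: "hdim_tot e' {a..b} = hdim_tot d {a..b}" if "1 \<le> a" "b \<le> N" for a b
        by (rule q'.hdim_tot_eq[OF that])
      have h1: "hdim_tot e' {Suc z..x} = hdim_tot d {Suc z..x}" by (rule h) (use m in auto)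
      have h2: "hdim_tot e' {z..x - 1} = hdim_tot d {z..x - 1}" by (rule h) (use m n in auto)
      have h3: "hdim_tot e' {Suc z..x - 1} = hdim_tot d {Suc z..x - 1}" by (rule h) (use m in auto)
      have h4: "hdim_tot e' {z..x} = hdim_tot d {z..x}" by (rule h) (use m n in auto)
      have "el'.P x z \<longleftrightarrow>
           hdim_tot d {Suc z..x} = hdim_tot d {z..x - 1} \<and>
           hdim_tot d {z..x - 1} = hdim_tot d {Suc z..x - 1} + 1 \<and>
           hdim_tot d {Suc z..x - 1} + 1 = hdim_tot d {z..x} + 1"
        using el'.part4_e[OF m n mn] unfolding h1 h2 h3 h4 .
      then show ?thesis using part4'[OF m n mn] by blast
    next
      case False
      then have "\<not> el.P x z" "\<not> el'.P x z" using el.P_range[of x z] el'.P_range[of x z] by auto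
      then show ?thesis by blast
    qed
    show "e' = e"
    proof (intro ext)
      fix z x show "e' z x = e z x" using el.e_val[of z x] el'.e_val[of z x] PP[of x z] by simp
    qed
  qed
  have ef: "elem_form N deg d = e"
    unfolding elem_form_def
  proof (rule the_equality)
    show "elementary N deg e \<and> M_equiv N deg d e" using El Eq by blast
    fix x assume "elementary N deg x \<and> M_equiv N deg d x"
    then show "x = e" using uniq by blast
  qed
  have dp: "dpair N deg d i j \<longleftrightarrow> el.P i j" for i j
    unfolding dpair_def ef using el.e_val[of j i] el.P_range[of i j] by auto
  have fp: "forms_pair N deg d x y \<longleftrightarrow> el.P x y \<or> el.P y x" for x y
    unfolding forms_pair_def dp ..
  have es: "essential N deg d x \<longleftrightarrow> el.ess x" for x
    unfolding essential_def fp el.ess_def ..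
  have c1: "\<forall>j\<in>{1..N}. essential N deg d j \<longleftrightarrow>
        iota_dim N deg d j (deg j) = iota_dim N deg d (j - 1) (deg j) + 1"
  proof
    fix j assume j: "j \<in> {1..N}"
    have "iota_dim N deg e j (deg j) = iota_dim N deg d j (deg j)"
      by (rule q.iota_dim_eq) (use j in auto)
    moreover have "iota_dim N deg e (j - 1) (deg j) = iota_dim N deg d (j - 1) (deg j)"
      by (rule q.iota_dim_eq) (use j in auto)
    ultimately show "essential N deg d j \<longleftrightarrow>
        iota_dim N deg d j (deg j) = iota_dim N deg d (j - 1) (deg j) + 1"
      using el.part1_e[OF j] es by simp
  qed
  have c2: "\<forall>k. card {j\<in>{1..N}. deg j = k \<and> essential N deg d j} = hdim_deg deg d {1..N} k"
  proof
    fix k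
    have "hdim_deg deg e {1..N} k = hdim_deg deg d {1..N} k"
      by (rule q.hdim_deg_eq) auto
    then show "card {j\<in>{1..N}. deg j = k \<and> essential N deg d j} = hdim_deg deg d {1..N} k"
      using el.part2_e[of k] es by simp
  qed
  have c3: "\<forall>i\<in>{1..N}. \<not> essential N deg d i \<longleftrightarrow> iota_img N d i = iota_img N d (i - 1)"
  proof
    fix i assume i: "i \<in> {1..N}"
    have "(iota_img N e i = iota_img N e (i - 1)) \<longleftrightarrow> (iota_img N d i = iota_img N d (i - 1))"
      by (rule q.iota_img_eq) (use i in auto)
    then show "\<not> essential N deg d i \<longleftrightarrow> iota_img N d i = iota_img N d (i - 1)"
      using el.part3_sets[OF i] iota_img_iff[of N e i "i - 1"] es by simp
  qed
  have c4: "\<forall>m\<in>{1..N}. \<forall>n\<in>{1..N}. m > n \<longrightarrow>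
        (forms_pair N deg d m n \<longleftrightarrow>
           rel_hdim d m n = rel_hdim d (m - 1) (n - 1) \<and>
           rel_hdim d (m - 1) (n - 1) = rel_hdim d (m - 1) n + 1 \<and>
           rel_hdim d (m - 1) n + 1 = rel_hdim d m (n - 1) + 1)"
  proof (intro ballI impI)
    fix m n assume m: "m \<in> {1..N}" and n: "n \<in> {1..N}" and mn: "m > n"
    have "\<not> el.P n m" using el.P_range mn by fastforce
    then have "forms_pair N deg d m n \<longleftrightarrow> el.P m n" using fp by blast
    moreover have "Suc (n - 1) = n" using n by auto
    ultimately show "forms_pair N deg d m n \<longleftrightarrow>
           rel_hdim d m n = rel_hdim d (m - 1) (n - 1) \<and>
           rel_hdim d (m - 1) (n - 1) = rel_hdim d (m - 1) n + 1 \<and>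
           rel_hdim d (m - 1) n + 1 = rel_hdim d m (n - 1) + 1"
      unfolding rel_hdim_def using part4'[OF m n mn] by simp
  qed
  show ?thesis by (rule conjI[OF c1 conjI[OF c2 conjI[OF c3 c4]]])
qed

end
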